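(* Let $H,U$ be separable complex Hilbert spaces, $T>0$, $A$ the generator of a $C_0$-semigroup $e^{tA}$ on $H$ with $\|e^{tA}\|\le Ce^{\omega t}$, $K\in L^2(0,T;\mathbb R)$, $B\in\mathcal L(U,H)$, $Q\in\mathcal L(H)$ with $Q=Q^*\ge0$. Let $\tau\in(0,T)$, $X_0=(\xi_0,\xi)\in Y_\tau$, let $(\hat u(\cdot;\tau,X_0),\hat w(\cdot;\tau,X_0))$ be the optimal pair minimizing $J_\tau(\cdot,X_0)$, and for $\tau_1\in(\tau,T)$ let $X_1=(\hat w(\tau_1;\tau,X_0),\hat y)\in Y_{\tau_1}$ with $\hat y=\xi$ on $[0,\tau]$, $\hat y=\hat w(\cdot;\tau,X_0)$ on $(\tau,\tau_1]$. Then for all $t\in(\tau_1,T)$, $\hat u(t;\tau,X_0)=\hat u(t;\tau_1,X_1)$ and $\hat w(t;\tau,X_0)=\hat w(t;\tau_1,X_1)$, where $(\hat u(\cdot;\tau_1,X_1),\hat w(\cdot;\tau_1,X_1))$ is the optimal pair minimizing $J_{\tau_1}(\cdot,X_1)$.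
   Context: For $\tau\in(0,T)$, $Y_\tau=H\times L^2(0,\tau;H)$. Given $X_0=(\xi_0,\xi)\in Y_\tau$ and $u\in L^2(\tau,T;U)$, the state $w(\cdot;\tau,X_0)$ is the mild solution of $w'(t)=Aw(t)+\int_\tau^tK(t-s)w(s)ds+\int_0^\tau K(t-s)\xi(s)ds+Bu(t)$ on $(\tau,T)$, $w(\tau)=\xi_0$, i.e. the unique $w\in L^2(\tau,T;H)$ with $w(t)=e^{(t-\tau)A}\xi_0+\int_\tau^te^{(t-s)A}\int_\tau^sK(s-\sigma)w(\sigma)d\sigma ds+\int_\tau^te^{(t-s)A}\int_0^\tau K(s-\sigma)\xi(\sigma)d\sigma ds+\int_\tau^te^{(t-s)A}Bu(s)ds$ a.e. The cost is $J_\tau(u,X_0)=\int_\tau^T(\langle Qw(t),w(t)\rangle_H+\|u(t)\|_U^2)dt$; the optimal pair is the (unique) minimizing control with its state. *)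

theory Defs
  imports "HOL-Analysis.Analysis"
begin

definition L2_on :: "real \<Rightarrow> real \<Rightarrow> (real \<Rightarrow> 'a::{banach,second_countable_topology}) \<Rightarrow> bool" where
  "L2_on a b f \<longleftrightarrow> set_borel_measurable lborel {a<..<b} f \<and>
     set_integrable lborel {a<..<b} (\<lambda>t. (norm (f t))^2)"

definition C0_semigroup :: "(real \<Rightarrow> 'a::real_normed_vector \<Rightarrow> 'a) \<Rightarrow> bool" where
  "C0_semigroup S \<longleftrightarrow> (\<forall>t\<ge>0. bounded_linear (S t)) \<and> S 0 = id \<and>
     (\<forall>t s. t \<ge> 0 \<longrightarrow> s \<ge> 0 \<longrightarrow> S (t + s) = S t \<circ> S s) \<and>
     (\<forall>x. continuous_on {0..} (\<lambda>t. S t x))"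

definition generator :: "(real \<Rightarrow> 'a::real_normed_vector \<Rightarrow> 'a) \<Rightarrow> 'a set \<Rightarrow> ('a \<Rightarrow> 'a) \<Rightarrow> bool" where
  "generator S D A \<longleftrightarrow>
     D = {x. \<exists>y. ((\<lambda>h. (1 / h) *\<^sub>R (S h x - x)) \<longlongrightarrow> y) (at_right 0)} \<and>
     (\<forall>x\<in>D. ((\<lambda>h. (1 / h) *\<^sub>R (S h x - x)) \<longlongrightarrow> A x) (at_right 0))"

text \<open>Orthogonal complex structure: a real Hilbert space together with J is a complex
  Hilbert space (multiplication by i is J).\<close>
definition complex_structure :: "('a::real_inner \<Rightarrow> 'a) \<Rightarrow> bool" where
  "complex_structure J \<longleftrightarrow> bounded_linear J \<and> (\<forall>x. J (J x) = - x) \<and>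
     (\<forall>x y. inner (J x) (J y) = inner x y)"

text \<open>Mild solution on [tau,T] of the controlled Volterra equation with initial datum xi0
  and history xi on [0,tau]; the identity is required for every t in [tau,T]
  (continuous representative, so that point values make sense).\<close>
definition mild_solution ::
  "(real \<Rightarrow> 'h \<Rightarrow> 'h) \<Rightarrow> (real \<Rightarrow> real) \<Rightarrow> ('u \<Rightarrow> 'h) \<Rightarrow> real \<Rightarrow> real \<Rightarrow>
   'h \<Rightarrow> (real \<Rightarrow> 'h) \<Rightarrow> (real \<Rightarrow> 'u) \<Rightarrow> (real \<Rightarrow> 'h::{real_inner,banach,second_countable_topology}) \<Rightarrow> bool" where
  "mild_solution S K B \<tau> T \<xi>0 \<xi> u w \<longleftrightarrow> L2_on \<tau> T w \<and>
     (\<forall>t\<in>{\<tau>..T}. w t =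
        S (t - \<tau>) \<xi>0
      + (LINT s:{\<tau>..t}|lborel. S (t - s) (LINT \<sigma>:{\<tau>..s}|lborel. K (s - \<sigma>) *\<^sub>R w \<sigma>))
      + (LINT s:{\<tau>..t}|lborel. S (t - s) (LINT \<sigma>:{0..\<tau>}|lborel. K (s - \<sigma>) *\<^sub>R \<xi> \<sigma>))
      + (LINT s:{\<tau>..t}|lborel. S (t - s) (B (u s))))"

definition cost :: "('h::real_inner \<Rightarrow> 'h) \<Rightarrow> real \<Rightarrow> real \<Rightarrow> (real \<Rightarrow> 'u::real_normed_vector) \<Rightarrow> (real \<Rightarrow> 'h) \<Rightarrow> real" where
  "cost Q \<tau> T u w = (LINT t:{\<tau>..T}|lborel. inner (Q (w t)) (w t) + (norm (u t))^2)"

definition optimal_pair ::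
  "(real \<Rightarrow> 'h \<Rightarrow> 'h) \<Rightarrow> (real \<Rightarrow> real) \<Rightarrow> ('u \<Rightarrow> 'h) \<Rightarrow> ('h \<Rightarrow> 'h) \<Rightarrow> real \<Rightarrow> real \<Rightarrow>
   'h \<Rightarrow> (real \<Rightarrow> 'h) \<Rightarrow> (real \<Rightarrow> 'u::{real_inner,banach,second_countable_topology})
   \<Rightarrow> (real \<Rightarrow> 'h::{real_inner,banach,second_countable_topology}) \<Rightarrow> bool" where
  "optimal_pair S K B Q \<tau> T \<xi>0 \<xi> u w \<longleftrightarrow>
     L2_on \<tau> T u \<and> mild_solution S K B \<tau> T \<xi>0 \<xi> u w \<and>
     (\<forall>v z. L2_on \<tau> T v \<and> mild_solution S K B \<tau> T \<xi>0 \<xi> v z \<longrightarrow>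
        cost Q \<tau> T u w \<le> cost Q \<tau> T v z)"

end

theory Submission
  imports Defs
begin
definition L2c :: "real \<Rightarrow> real \<Rightarrow> (real \<Rightarrow> 'a::{banach,second_countable_topology}) \<Rightarrow> bool" where
  "L2c a b f \<longleftrightarrow> set_borel_measurable lborel {a..b} f \<and>
     set_integrable lborel {a..b} (\<lambda>t. (norm (f t))^2)"

lemma L2_on_imp_L2c:
  assumes "L2_on a b f" shows "L2c a b f"
proof -
  have m: "(\<lambda>x. indicator {a<..<b} x *\<^sub>R f x) \<in> borel_measurable lborel"
    using assms unfolding L2_on_def set_borel_measurable_def by auto
  have "(\<lambda>x. indicator {a..b} x *\<^sub>R f x) \<in> borel_measurable lborel"
    by (rule measurable_discrete_difference[OF m, of "{a,b}"]) (auto simp: indicator_def)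
  moreover have "set_integrable lborel {a..b} (\<lambda>t. (norm (f t))^2)"
    using assms unfolding L2_on_def
    by (subst set_integrable_discrete_difference[where X="{a,b}" and B="{a<..<b}"]) auto
  ultimately show ?thesis unfolding L2c_def set_borel_measurable_def by auto
qed

lemma L2c_subset:
  assumes "L2c a b f" "a \<le> c" "d \<le> b" shows "L2c c d f"
  using assms unfolding L2c_def
  by (auto intro: set_borel_measurable_subset set_integrable_subset)

lemma L2c_imp_L2_on:
  assumes "L2c a b f" shows "L2_on a b f"
  using assms unfolding L2c_def L2_on_def
  by (auto intro: set_borel_measurable_subset set_integrable_subset)

lemma L2c_cong:
  assumes "L2c a b f" "\<And>x. x \<in> {a..b} \<Longrightarrow> f x = g x" shows "L2c a b g"
proof -
  have "(\<lambda>x. indicator {a..b} x *\<^sub>R f x) = (\<lambda>x. indicator {a..b} x *\<^sub>R g x)"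
    using assms(2) by (auto simp: indicator_def fun_eq_iff)
  moreover have "set_integrable lborel {a..b} (\<lambda>t. (norm (f t))^2) = set_integrable lborel {a..b} (\<lambda>t. (norm (g t))^2)"
    using assms(2) by (intro set_integrable_cong) auto
  ultimately show ?thesis using assms(1) unfolding L2c_def set_borel_measurable_def by simp
qed

lemma L2c_splice:
  assumes "L2c a b f" "L2c b c g" "a \<le> b" "b \<le> c"
  shows "L2c a c (\<lambda>s. if s \<le> b then f s else g s)"
proof -
  let ?h = "\<lambda>s. if s \<le> b then f s else g s"
  have e: "(\<lambda>x. indicator {a..c} x *\<^sub>R ?h x) =
     (\<lambda>x. indicator {a..b} x *\<^sub>R f x + indicator {b<..c} x *\<^sub>R (indicator {b..c} x *\<^sub>R g x))"
    using assms(3,4) by (auto simp: indicator_def fun_eq_iff)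
  have m1: "(\<lambda>x. indicator {a..b} x *\<^sub>R f x) \<in> borel_measurable lborel"
    "(\<lambda>x. indicator {b..c} x *\<^sub>R g x) \<in> borel_measurable lborel"
    using assms unfolding L2c_def set_borel_measurable_def by auto
  have m: "set_borel_measurable lborel {a..c} ?h"
    unfolding set_borel_measurable_def e using m1 by measurable
  have i1: "set_integrable lborel {a..b} (\<lambda>t. (norm (?h t))^2)"
    using assms(1) unfolding L2c_def by (rule conjunct2[THEN set_integrable_cong[THEN iffD1, rotated -1]]) auto
  have i2: "set_integrable lborel {b<..c} (\<lambda>t. (norm (?h t))^2)"
  proof -
    have "set_integrable lborel {b<..c} (\<lambda>t. (norm (g t))^2)"
      using assms(2) unfolding L2c_def by (auto intro: set_integrable_subset)
    then show ?thesis by (rule set_integrable_cong[THEN iffD1, rotated -1]) auto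
  qed
  have "set_integrable lborel ({a..b} \<union> {b<..c}) (\<lambda>t. (norm (?h t))^2)"
    by (rule set_integrable_Un[OF i1 i2]) auto
  moreover have "{a..b} \<union> {b<..c} = {a..c}" using assms(3,4) by auto
  ultimately show ?thesis using m unfolding L2c_def by simp
qed

lemma L2c_norm_integrable:
  assumes "L2c a b f" shows "set_integrable lborel {a..b} (\<lambda>t. norm (f t))"
proof -
  have fin: "emeasure lborel {a..b} < \<infinity>"
    by (simp add: emeasure_lborel_Icc_eq)
  have ii: "integrable lborel (indicator {a..b} :: real \<Rightarrow> real)"
    by (rule integrable_real_indicator) (simp_all only: fin sets_lborel atLeastAtMost_borel)
  have i2: "set_integrable lborel {a..b} (\<lambda>t. (norm (f t))^2)" using assms unfolding L2c_def by blast
  have i3: "set_integrable lborel {a..b} (\<lambda>t. 1 + (norm (f t))^2)"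
    apply (rule set_integral_add(1)[OF _ i2])
    using ii unfolding set_integrable_def by simp
  have m3: "set_borel_measurable lborel {a..b} (\<lambda>t. norm (f t))"
  proof -
    have eq: "(\<lambda>t. indicator {a..b} t *\<^sub>R norm (f t)) = (\<lambda>t. norm (indicator {a..b} t *\<^sub>R f t))"
      by (simp add: fun_eq_iff indicator_def)
    have "(\<lambda>t. indicator {a..b} t *\<^sub>R f t) \<in> borel_measurable lborel"
      using assms unfolding L2c_def set_borel_measurable_def by simp
    then show ?thesis unfolding set_borel_measurable_def eq by (rule measurable_compose[OF _ borel_measurable_norm])
  qed
  have le3: "norm (f t) \<le> 1 + (norm (f t))^2" for t
    proof -
      have "0 \<le> (norm (f t) - 1)^2" by simp
      then have "2*norm (f t) \<le> 1 + (norm (f t))^2" by (simp add: power2_eq_square algebra_simps)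
      then show ?thesis using norm_ge_zero[of "f t"] by linarith
    qed
  show ?thesis by (rule set_integrable_bound[OF i3 m3]) (intro AE_I2 impI, simp add: le3)
qed

locale vsys =
  fixes S :: "real \<Rightarrow> 'h::{real_inner,banach,second_countable_topology} \<Rightarrow> 'h"
    and K :: "real \<Rightarrow> real"
    and B :: "'u::{real_inner,banach,second_countable_topology} \<Rightarrow> 'h"
    and T M0 :: real
  assumes T_pos: "T > 0"
    and S_lin: "\<And>t. 0 \<le> t \<Longrightarrow> bounded_linear (S t)"
    and S_0: "S 0 = id"
    and S_semi: "\<And>t s. 0 \<le> t \<Longrightarrow> 0 \<le> s \<Longrightarrow> S (t + s) = S t \<circ> S s"
    and S_cont: "\<And>x. continuous_on {0..} (\<lambda>t. S t x)"
    and M0_nonneg: "M0 \<ge> 0"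
    and M0_bound: "\<And>t x. 0 \<le> t \<Longrightarrow> t \<le> T \<Longrightarrow> norm (S t x) \<le> M0 * norm x"
    and K_L2: "L2c 0 T K"
    and B_lin: "bounded_linear B"
begin

definition Sc :: "real \<Rightarrow> 'h \<Rightarrow> 'h" where
  "Sc r x = S (max 0 (min T r)) x"

lemma S_linear: "0 \<le> t \<Longrightarrow> linear (S t)"
  using S_lin bounded_linear.linear by blast

lemma Sc_cont1: "continuous_on UNIV (\<lambda>r. Sc r x)"
  unfolding Sc_def
  by (rule continuous_on_compose2[OF S_cont[of x]]) (auto intro!: continuous_intros)

lemma Sc_lin: "linear (Sc r)"
  unfolding Sc_def by (rule S_linear) simp

lemma Sc_bound: "norm (Sc r x) \<le> M0 * norm x"
  unfolding Sc_def using T_pos by (intro M0_bound) auto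

lemma Sc_joint_cont: "continuous_on UNIV (\<lambda>p. Sc (fst p) (snd p))"
proof -
  have "isCont (\<lambda>p. Sc (fst p) (snd p)) (r0, x0)" for r0 x0
  proof -
    have 1: "((\<lambda>p. Sc (fst p) x0) \<longlongrightarrow> Sc r0 x0) (at (r0, x0))"
    proof -
      have "isCont (\<lambda>r. Sc r x0) r0" using Sc_cont1[of x0]
        by (simp add: continuous_on_eq_continuous_at)
      then have "((\<lambda>r. Sc r x0) \<longlongrightarrow> Sc r0 x0) (at r0)" by (simp add: isCont_def)
      have isc: "isCont (\<lambda>r. Sc r x0) r0" by fact
      have fl: "((\<lambda>p. fst p) \<longlongrightarrow> r0) (at (r0, x0))"
        using tendsto_fst[OF tendsto_ident_at[of "(r0,x0)" UNIV]] by simp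
      show ?thesis using isCont_tendsto_compose[OF isc fl] .
    qed
    have 2: "((\<lambda>p. Sc (fst p) (snd p - x0)) \<longlongrightarrow> 0) (at (r0, x0))"
    proof (rule Lim_null_comparison)
      show "\<forall>\<^sub>F p in at (r0, x0). norm (Sc (fst p) (snd p - x0)) \<le> M0 * norm (snd p - x0)"
        by (simp add: Sc_bound)
      have "((\<lambda>p. snd p - x0) \<longlongrightarrow> x0 - x0) (at (r0, x0))"
        using tendsto_diff[OF tendsto_snd[OF tendsto_ident_at[of "(r0,x0)" UNIV]] tendsto_const[of x0]] by simp
      then have "((\<lambda>p. norm (snd p - x0)) \<longlongrightarrow> 0) (at (r0, x0))"
        using tendsto_norm_zero by force
      then show "((\<lambda>p. M0 * norm (snd p - x0)) \<longlongrightarrow> 0) (at (r0, x0))"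
        using tendsto_mult_right_zero by blast
    qed
    have "((\<lambda>p. Sc (fst p) x0 + Sc (fst p) (snd p - x0)) \<longlongrightarrow> Sc r0 x0 + 0) (at (r0, x0))"
      using 1 2 by (rule tendsto_add)
    moreover have "Sc (fst p) x0 + Sc (fst p) (snd p - x0) = Sc (fst p) (snd p)" for p
      using Sc_lin[of "fst p"] by (simp add: linear_diff)
    ultimately show ?thesis by (simp add: isCont_def)
  qed
  then show ?thesis by (simp add: continuous_on_eq_continuous_at)
qed

lemma Sc_meas:
  assumes "g \<in> borel_measurable lborel" "f \<in> borel_measurable lborel"
  shows "(\<lambda>s. Sc (f s) (g s)) \<in> borel_measurable lborel"
  using borel_measurable_continuous_Pair[OF assms(2,1) Sc_joint_cont] by simp

lemma norm_set_integral_le: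
  fixes f :: "real \<Rightarrow> 'a::{banach,second_countable_topology}"
  assumes A: "A \<in> sets lborel" and g: "set_integrable lborel A g"
    and le: "\<And>s. s \<in> A \<Longrightarrow> norm (f s) \<le> g s"
  shows "norm (LINT s:A|lborel. f s) \<le> (LINT s:A|lborel. g s)"
proof -
  have "norm (LINT s:A|lborel. f s) \<le> (\<integral>s. norm (indicator A s *\<^sub>R f s) \<partial>lborel)"
    unfolding set_lebesgue_integral_def by (rule integral_norm_bound)
  also have "\<dots> \<le> (LINT s:A|lborel. g s)"
  proof (cases "integrable lborel (\<lambda>s. norm (indicator A s *\<^sub>R f s))")
    case True
    show ?thesis unfolding set_lebesgue_integral_def
      using g True le by (intro integral_mono) (auto simp: set_integrable_def indicator_def)
  next
    case False
    then have "(\<integral>s. norm (indicator A s *\<^sub>R f s) \<partial>lborel) = 0"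
      by (rule not_integrable_integral_eq)
    moreover have "0 \<le> (LINT s:A|lborel. g s)"
      unfolding set_lebesgue_integral_def
    proof (rule Bochner_Integration.integral_nonneg)
      fix x show "0 \<le> indicator A x *\<^sub>R g x"
      proof (cases "x \<in> A")
        case True
        then have "0 \<le> g x" using le[of x] norm_ge_zero[of "f x"] by linarith
        then show ?thesis using True by simp
      qed simp
    qed
    ultimately show ?thesis by simp
  qed
  finally show ?thesis .
qed

lemma split_int:
  fixes f :: "real \<Rightarrow> 'a::{banach,second_countable_topology}"
  assumes "set_integrable lborel {a..c} f" "a \<le> b" "b \<le> c"
  shows "(LINT s:{a..c}|lborel. f s) = (LINT s:{a..b}|lborel. f s) + (LINT s:{b..c}|lborel. f s)"
proof -
  have "{a..c} = {a..b} \<union> {b<..c}" using assms by auto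
  then have "(LINT s:{a..c}|lborel. f s) = (LINT s:{a..b}|lborel. f s) + (LINT s:{b<..c}|lborel. f s)"
    using assms by (simp, intro set_integral_Un) (auto intro: set_integrable_subset)
  moreover have "(LINT s:{b<..c}|lborel. f s) = (LINT s:{b..c}|lborel. f s)"
    by (rule set_integral_discrete_difference[where X="{b}"]) auto
  ultimately show ?thesis by simp
qed

lemma point_int: "(LINT s:{(a::real)..a}|lborel. (f s :: 'a::{banach,second_countable_topology})) = 0"
proof -
  have "(LINT s:{a..a}|lborel. f s) = (LINT s:{}|lborel. f s)"
    by (rule set_integral_discrete_difference[where X="{a}"]) (auto intro: order_antisym)
  then show ?thesis by (simp add: set_lebesgue_integral_def)
qed

end

lemma CS_real:
  fixes f g :: "'a \<Rightarrow> real"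
  assumes fm: "f \<in> borel_measurable M" and gm: "g \<in> borel_measurable M"
    and fi: "integrable M (\<lambda>x. (f x)^2)" and gi: "integrable M (\<lambda>x. (g x)^2)"
  shows "integrable M (\<lambda>x. f x * g x)"
    and "\<bar>\<integral>x. f x * g x \<partial>M\<bar> \<le> sqrt (\<integral>x. (f x)^2 \<partial>M) * sqrt (\<integral>x. (g x)^2 \<partial>M)"
proof -
  have sum_i: "integrable M (\<lambda>x. (f x)^2 + (g x)^2)" using fi gi by (rule Bochner_Integration.integrable_add)
  have pm: "(\<lambda>x. f x * g x) \<in> borel_measurable M" using fm gm by (rule borel_measurable_times)
  have le: "norm (f x * g x) \<le> norm ((f x)^2 + (g x)^2)" for x
  proof -
    have "0 \<le> (\<bar>f x\<bar> - \<bar>g x\<bar>)^2" by simp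
    then have "2 * (\<bar>f x\<bar> * \<bar>g x\<bar>) \<le> (f x)^2 + (g x)^2"
      by (simp add: power2_eq_square algebra_simps)
    moreover have "0 \<le> \<bar>f x\<bar> * \<bar>g x\<bar>" by simp
    ultimately have "\<bar>f x\<bar> * \<bar>g x\<bar> \<le> (f x)^2 + (g x)^2" by linarith
    then show ?thesis by (simp add: abs_mult)
  qed
  show pi: "integrable M (\<lambda>x. f x * g x)"
  proof (rule Bochner_Integration.integrable_bound[OF sum_i pm])
    show "AE x in M. norm (f x * g x) \<le> norm ((f x)^2 + (g x)^2)" using le by simp
  qed
  define A where "A = (\<integral>x. (f x)^2 \<partial>M)"
  define Bv where "Bv = (\<integral>x. (g x)^2 \<partial>M)"
  define C where "C = (\<integral>x. f x * g x \<partial>M)"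
  have A0: "0 \<le> A" unfolding A_def by (rule Bochner_Integration.integral_nonneg) simp
  have B0: "0 \<le> Bv" unfolding Bv_def by (rule Bochner_Integration.integral_nonneg) simp
  have quad: "0 \<le> A - 2 * l * C + l^2 * Bv" for l
  proof -
    have i1: "integrable M (\<lambda>x. (2 * l) * (f x * g x))" using pi by simp
    have i2: "integrable M (\<lambda>x. l^2 * (g x)^2)" using gi by simp
    have "0 \<le> (\<integral>x. (f x - l * g x)^2 \<partial>M)"
      by (rule Bochner_Integration.integral_nonneg) simp
    also have "(\<lambda>x. (f x - l * g x)^2) = (\<lambda>x. ((f x)^2 - (2 * l) * (f x * g x)) + l^2 * (g x)^2)"
      by (simp add: fun_eq_iff power2_eq_square algebra_simps)
    also have "(\<integral>x. ((f x)^2 - (2 * l) * (f x * g x)) + l^2 * (g x)^2 \<partial>M)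
        = (\<integral>x. (f x)^2 - (2 * l) * (f x * g x) \<partial>M) + (\<integral>x. l^2 * (g x)^2 \<partial>M)"
      by (rule Bochner_Integration.integral_add) (use fi i1 i2 in auto)
    also have "(\<integral>x. (f x)^2 - (2 * l) * (f x * g x) \<partial>M) = A - (\<integral>x. (2 * l) * (f x * g x) \<partial>M)"
      unfolding A_def by (rule Bochner_Integration.integral_diff[OF fi i1])
    also have "(\<integral>x. (2 * l) * (f x * g x) \<partial>M) = 2 * l * C" unfolding C_def by simp
    also have "(\<integral>x. l^2 * (g x)^2 \<partial>M) = l^2 * Bv" unfolding Bv_def by simp
    finally show ?thesis by simp
  qed
  have C2: "C^2 \<le> A * Bv"
  proof (cases "Bv = 0")
    case True
    have "C = 0"
    proof (rule ccontr)
      assume "C \<noteq> 0"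
      have "0 \<le> A - 2 * ((A + 1) / (2 * C)) * C + ((A + 1) / (2 * C))^2 * Bv" by (rule quad)
      also have "\<dots> = -1" using \<open>C \<noteq> 0\<close> True by (simp add: field_simps)
      finally show False by simp
    qed
    then show ?thesis using True by simp
  next
    case False
    then have Bp: "Bv > 0" using B0 by simp
    have "0 \<le> A - 2 * (C / Bv) * C + (C / Bv)^2 * Bv" by (rule quad)
    also have "\<dots> = A - C^2 / Bv" using Bp by (simp add: field_simps power2_eq_square)
    finally have "C^2 / Bv \<le> A" by simp
    then show ?thesis using Bp by (simp add: field_simps)
  qed
  have "\<bar>C\<bar> = sqrt (C^2)" by simp
  also have "\<dots> \<le> sqrt (A * Bv)" using C2 by (rule real_sqrt_le_mono)
  also have "\<dots> = sqrt A * sqrt Bv" by (simp add: real_sqrt_mult)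
  finally show "\<bar>\<integral>x. f x * g x \<partial>M\<bar> \<le> sqrt (\<integral>x. (f x)^2 \<partial>M) * sqrt (\<integral>x. (g x)^2 \<partial>M)"
    unfolding A_def Bv_def C_def .
qed

context vsys begin

definition kap :: real where "kap = (LINT t:{0..T}|lborel. (K t)^2)"

definition Kt :: "real \<Rightarrow> real" where "Kt t = indicator {0..T} t * K t"

lemma Kt_meas: "Kt \<in> borel_measurable borel"
proof -
  have "(\<lambda>x. indicator {0..T} x *\<^sub>R K x) \<in> borel_measurable lborel"
    using K_L2 unfolding L2c_def set_borel_measurable_def by simp
  then show ?thesis unfolding Kt_def by simp
qed

lemma kap_nonneg: "0 \<le> kap"
  unfolding kap_def set_lebesgue_integral_def
  by (rule Bochner_Integration.integral_nonneg) simp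

lemma K_sq:
  assumes ce: "c \<le> e" and s1: "0 \<le> s - e" and s2: "s - c \<le> T"
  shows "set_integrable lborel {c..e} (\<lambda>\<sigma>. (K (s - \<sigma>))^2)"
    and "(LINT \<sigma>:{c..e}|lborel. (K (s - \<sigma>))^2) \<le> kap"
    and "set_borel_measurable lborel {c..e} (\<lambda>\<sigma>. K (s - \<sigma>))"
proof -
  define Fi where "Fi = (\<lambda>r. indicator {s-e..s-c} r *\<^sub>R (K r)^2)"
  have sub: "{s-e..s-c} \<subseteq> {0..T}" using s1 s2 by auto
  have KI: "set_integrable lborel {0..T} (\<lambda>t. (K t)^2)"
    using K_L2 unfolding L2c_def by simp
  have Fi_int: "integrable lborel Fi"
    using set_integrable_subset[OF KI _ sub] unfolding Fi_def set_integrable_def by simp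
  have Fi_eq: "Fi (s + (-1) * \<sigma>) = indicator {c..e} \<sigma> *\<^sub>R (K (s - \<sigma>))^2" for \<sigma>
    unfolding Fi_def by (auto simp: indicator_def)
  have "integrable lborel (\<lambda>\<sigma>. Fi (s + (-1) * \<sigma>))"
    by (rule lborel_integrable_real_affine[OF Fi_int]) simp
  then show "set_integrable lborel {c..e} (\<lambda>\<sigma>. (K (s - \<sigma>))^2)"
    unfolding set_integrable_def Fi_eq .
  have "(\<integral>x. Fi x \<partial>lborel) = \<bar>-1\<bar> *\<^sub>R (\<integral>x. Fi (s + (-1) * x) \<partial>lborel)"
    by (rule lborel_integral_real_affine) simp
  then have eq: "(LINT \<sigma>:{c..e}|lborel. (K (s - \<sigma>))^2) = (\<integral>x. Fi x \<partial>lborel)"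
    unfolding set_lebesgue_integral_def Fi_eq by simp
  have "(\<integral>x. Fi x \<partial>lborel) \<le> (\<integral>x. indicator {0..T} x *\<^sub>R (K x)^2 \<partial>lborel)"
  proof (rule integral_mono[OF Fi_int])
    show "integrable lborel (\<lambda>x. indicator {0..T} x *\<^sub>R (K x)^2)" using KI unfolding set_integrable_def .
    fix x show "Fi x \<le> indicator {0..T} x *\<^sub>R (K x)^2"
      unfolding Fi_def using sub by (auto simp: indicator_def)
  qed
  then show "(LINT \<sigma>:{c..e}|lborel. (K (s - \<sigma>))^2) \<le> kap"
    using eq unfolding kap_def set_lebesgue_integral_def by simp
  have m1: "(\<lambda>\<sigma>. s - \<sigma>) \<in> measurable borel borel" by simp
  have m2: "(\<lambda>\<sigma>. Kt (s - \<sigma>)) \<in> borel_measurable borel"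
    by (rule measurable_compose[OF m1 Kt_meas])
  have "(\<lambda>\<sigma>. indicator {c..e} \<sigma> *\<^sub>R K (s - \<sigma>)) = (\<lambda>\<sigma>. indicator {c..e} \<sigma> * Kt (s - \<sigma>))"
    unfolding Kt_def using s1 s2 by (auto simp: indicator_def fun_eq_iff)
  moreover have "(\<lambda>\<sigma>. indicator {c..e} \<sigma> * Kt (s - \<sigma>)) \<in> borel_measurable borel"
    by (rule borel_measurable_times[OF _ m2]) simp
  ultimately show "set_borel_measurable lborel {c..e} (\<lambda>\<sigma>. K (s - \<sigma>))"
    unfolding set_borel_measurable_def by simp
qed

end

lemma set_integrable_const_real:
  "set_integrable lborel {a..b::real} (\<lambda>_. C::real)"
proof -
  have fin: "emeasure lborel {a..b} < \<infinity>" by (simp add: emeasure_lborel_Icc_eq)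
  have "integrable lborel (\<lambda>t. indicator {a..b} t * C)"
    by (rule integrable_mult_left, rule integrable_real_indicator) (simp_all only: fin sets_lborel atLeastAtMost_borel)
  then show ?thesis unfolding set_integrable_def by simp
qed

lemma set_integrable_bounded:
  fixes g :: "real \<Rightarrow> 'a::{banach,second_countable_topology}"
  assumes "set_borel_measurable lborel {a..b} g" "\<And>s. s \<in> {a..b} \<Longrightarrow> norm (g s) \<le> C"
  shows "set_integrable lborel {a..b} g"
proof (rule set_integrable_bound[OF set_integrable_const_real[of a b C] assms(1)])
  show "AE x in lborel. x \<in> {a..b} \<longrightarrow> norm (g x) \<le> norm C"
    using assms(2) by (intro AE_I2 impI) (smt (verit) real_norm_def)
qed

lemma set_borel_measurable_norm:
  fixes g :: "real \<Rightarrow> 'a::{banach,second_countable_topology}"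
  assumes "set_borel_measurable lborel A g"
  shows "set_borel_measurable lborel A (\<lambda>s. norm (g s))"
proof -
  have eq: "(\<lambda>t. indicator A t *\<^sub>R norm (g t)) = (\<lambda>t. norm (indicator A t *\<^sub>R g t))"
    by (simp add: fun_eq_iff indicator_def)
  have "(\<lambda>t. indicator A t *\<^sub>R g t) \<in> borel_measurable lborel"
    using assms unfolding set_borel_measurable_def by simp
  then show ?thesis unfolding set_borel_measurable_def eq by (rule measurable_compose[OF _ borel_measurable_norm])
qed

context vsys begin

lemma conv_bound:
  assumes ce: "c \<le> e" and s1: "0 \<le> s - e" and s2: "s - c \<le> T" and w: "L2c c e w"
  shows "set_integrable lborel {c..e} (\<lambda>\<sigma>. K (s - \<sigma>) *\<^sub>R w \<sigma>)"
    and "norm (LINT \<sigma>:{c..e}|lborel. K (s - \<sigma>) *\<^sub>R w \<sigma>)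
          \<le> sqrt kap * sqrt (LINT \<sigma>:{c..e}|lborel. (norm (w \<sigma>))^2)"
proof -
  define f where "f = (\<lambda>\<sigma>. \<bar>indicator {c..e} \<sigma> *\<^sub>R K (s - \<sigma>)\<bar>)"
  define g where "g = (\<lambda>\<sigma>. norm (indicator {c..e} \<sigma> *\<^sub>R w \<sigma>))"
  have Km: "(\<lambda>\<sigma>. indicator {c..e} \<sigma> *\<^sub>R K (s - \<sigma>)) \<in> borel_measurable lborel"
    using K_sq(3)[OF ce s1 s2] unfolding set_borel_measurable_def .
  have wm: "(\<lambda>\<sigma>. indicator {c..e} \<sigma> *\<^sub>R w \<sigma>) \<in> borel_measurable lborel"
    using w unfolding L2c_def set_borel_measurable_def by simp
  have fm: "f \<in> borel_measurable lborel" unfolding f_def by (rule borel_measurable_abs[OF Km])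
  have gm: "g \<in> borel_measurable lborel" unfolding g_def
    by (rule measurable_compose[OF wm borel_measurable_norm])
  have f2: "(\<lambda>\<sigma>. (f \<sigma>)^2) = (\<lambda>\<sigma>. indicator {c..e} \<sigma> *\<^sub>R (K (s - \<sigma>))^2)"
    unfolding f_def by (auto simp: fun_eq_iff indicator_def)
  have g2: "(\<lambda>\<sigma>. (g \<sigma>)^2) = (\<lambda>\<sigma>. indicator {c..e} \<sigma> *\<^sub>R (norm (w \<sigma>))^2)"
    unfolding g_def by (auto simp: fun_eq_iff indicator_def)
  have fi: "integrable lborel (\<lambda>\<sigma>. (f \<sigma>)^2)"
    unfolding f2 using K_sq(1)[OF ce s1 s2] unfolding set_integrable_def .
  have gi: "integrable lborel (\<lambda>\<sigma>. (g \<sigma>)^2)"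
    unfolding g2 using w unfolding L2c_def set_integrable_def by simp
  have pint: "integrable lborel (\<lambda>\<sigma>. f \<sigma> * g \<sigma>)" by (rule CS_real(1)[OF fm gm fi gi])
  have nf: "norm (indicator {c..e} \<sigma> *\<^sub>R (K (s - \<sigma>) *\<^sub>R w \<sigma>)) = f \<sigma> * g \<sigma>" for \<sigma>
    unfolding f_def g_def by (simp add: indicator_def abs_mult)
  have pm: "(\<lambda>\<sigma>. indicator {c..e} \<sigma> *\<^sub>R (K (s - \<sigma>) *\<^sub>R w \<sigma>)) \<in> borel_measurable lborel"
  proof -
    have "(\<lambda>\<sigma>. indicator {c..e} \<sigma> *\<^sub>R (K (s - \<sigma>) *\<^sub>R w \<sigma>))
        = (\<lambda>\<sigma>. (indicator {c..e} \<sigma> *\<^sub>R K (s - \<sigma>)) *\<^sub>R (indicator {c..e} \<sigma> *\<^sub>R w \<sigma>))"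
      by (auto simp: fun_eq_iff indicator_def)
    then show ?thesis using borel_measurable_scaleR[OF Km wm] by simp
  qed
  show si: "set_integrable lborel {c..e} (\<lambda>\<sigma>. K (s - \<sigma>) *\<^sub>R w \<sigma>)"
    unfolding set_integrable_def
  proof (rule Bochner_Integration.integrable_bound[OF pint pm])
    show "AE x in lborel. norm (indicator {c..e} x *\<^sub>R (K (s - x) *\<^sub>R w x)) \<le> norm (f x * g x)"
      by (intro AE_I2) (simp only: nf, simp)
  qed
  have "norm (LINT \<sigma>:{c..e}|lborel. K (s - \<sigma>) *\<^sub>R w \<sigma>)
      \<le> (\<integral>\<sigma>. norm (indicator {c..e} \<sigma> *\<^sub>R (K (s - \<sigma>) *\<^sub>R w \<sigma>)) \<partial>lborel)"
    unfolding set_lebesgue_integral_def by (rule integral_norm_bound)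
  also have "\<dots> = (\<integral>\<sigma>. f \<sigma> * g \<sigma> \<partial>lborel)" by (simp only: nf)
  also have "\<dots> \<le> \<bar>\<integral>\<sigma>. f \<sigma> * g \<sigma> \<partial>lborel\<bar>" by simp
  also have "\<dots> \<le> sqrt (\<integral>\<sigma>. (f \<sigma>)^2 \<partial>lborel) * sqrt (\<integral>\<sigma>. (g \<sigma>)^2 \<partial>lborel)"
    by (rule CS_real(2)[OF fm gm fi gi])
  also have "(\<integral>\<sigma>. (f \<sigma>)^2 \<partial>lborel) = (LINT \<sigma>:{c..e}|lborel. (K (s - \<sigma>))^2)"
    unfolding f2 set_lebesgue_integral_def ..
  also have "(\<integral>\<sigma>. (g \<sigma>)^2 \<partial>lborel) = (LINT \<sigma>:{c..e}|lborel. (norm (w \<sigma>))^2)"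
    unfolding g2 set_lebesgue_integral_def ..
  also have "sqrt (LINT \<sigma>:{c..e}|lborel. (K (s - \<sigma>))^2) * sqrt (LINT \<sigma>:{c..e}|lborel. (norm (w \<sigma>))^2)
      \<le> sqrt kap * sqrt (LINT \<sigma>:{c..e}|lborel. (norm (w \<sigma>))^2)"
  proof (rule mult_right_mono)
    have "0 \<le> (LINT \<sigma>:{c..e}|lborel. (norm (w \<sigma>))^2)"
      unfolding set_lebesgue_integral_def by (rule Bochner_Integration.integral_nonneg) simp
    then show "0 \<le> sqrt (LINT \<sigma>:{c..e}|lborel. (norm (w \<sigma>))^2)" by simp
  qed (use K_sq(2)[OF ce s1 s2] in auto)
  finally show "norm (LINT \<sigma>:{c..e}|lborel. K (s - \<sigma>) *\<^sub>R w \<sigma>)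
          \<le> sqrt kap * sqrt (LINT \<sigma>:{c..e}|lborel. (norm (w \<sigma>))^2)" .
qed

lemma S_int:
  fixes g :: "real \<Rightarrow> 'h"
  assumes at: "a \<le> t" and ta: "t - a \<le> T"
    and gm: "set_borel_measurable lborel {a..t} g"
    and gi: "set_integrable lborel {a..t} (\<lambda>s. norm (g s))"
  shows "set_integrable lborel {a..t} (\<lambda>s. S (t - s) (g s))"
proof (rule set_integrable_bound[of lborel "{a..t}" "\<lambda>s. M0 * norm (g s)"])
  show "set_integrable lborel {a..t} (\<lambda>s. M0 * norm (g s))"
    using gi unfolding set_integrable_def
    by (simp add: integrable_mult_right mult.left_commute[of _ M0])
  have gm': "(\<lambda>s. indicator {a..t} s *\<^sub>R g s) \<in> borel_measurable lborel"
    using gm unfolding set_borel_measurable_def .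
  have eq: "(\<lambda>s. indicator {a..t} s *\<^sub>R S (t - s) (g s)) = (\<lambda>s. Sc (t - s) (indicator {a..t} s *\<^sub>R g s))"
  proof
    fix s show "indicator {a..t} s *\<^sub>R S (t - s) (g s) = Sc (t - s) (indicator {a..t} s *\<^sub>R g s)"
    proof (cases "s \<in> {a..t}")
      case True
      then have "max 0 (min T (t - s)) = t - s" using ta by auto
      then show ?thesis using True unfolding Sc_def by simp
    next
      case False
      then show ?thesis using linear_0[OF Sc_lin] by simp
    qed
  qed
  show "set_borel_measurable lborel {a..t} (\<lambda>s. S (t - s) (g s))"
    unfolding set_borel_measurable_def eq
    by (rule Sc_meas[OF gm']) simp
  show "AE x in lborel. x \<in> {a..t} \<longrightarrow> norm (S (t - x) (g x)) \<le> norm (M0 * norm (g x))"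
  proof (intro AE_I2 impI)
    fix x assume "x \<in> {a..t}"
    then have "norm (S (t - x) (g x)) \<le> M0 * norm (g x)" using ta by (intro M0_bound) auto
    then show "norm (S (t - x) (g x)) \<le> norm (M0 * norm (g x))" using M0_nonneg by simp
  qed
qed

end

context vsys begin

lemma conv_meas:
  fixes w :: "real \<Rightarrow> 'h"
  assumes c0: "0 \<le> c" and w: "set_borel_measurable lborel {c..e} w"
  shows "set_borel_measurable lborel {c..T} (\<lambda>s. LINT \<sigma>:{c..min s e}|lborel. K (s - \<sigma>) *\<^sub>R w \<sigma>)"
proof -
  define wt where "wt = (\<lambda>\<sigma>. indicator {c..e} \<sigma> *\<^sub>R w \<sigma>)"
  have wtm[measurable]: "wt \<in> borel_measurable borel"
    using w unfolding wt_def set_borel_measurable_def by simp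
  have Ktm[measurable]: "Kt \<in> borel_measurable borel" by (rule Kt_meas)
  define F where "F = (\<lambda>s \<sigma>. (if c \<le> \<sigma> \<and> \<sigma> \<le> min s e then Kt (s - \<sigma>) else 0) *\<^sub>R wt \<sigma>)"
  have Fm: "(\<lambda>(s, \<sigma>). F s \<sigma>) \<in> borel_measurable (lborel \<Otimes>\<^sub>M lborel)"
    unfolding F_def by measurable
  have Gm: "(\<lambda>s. \<integral>\<sigma>. F s \<sigma> \<partial>lborel) \<in> borel_measurable lborel"
    using lborel.borel_measurable_lebesgue_integral[where f=F and N=lborel, OF Fm] by simp
  have eq: "indicator {c..T} s *\<^sub>R (LINT \<sigma>:{c..min s e}|lborel. K (s - \<sigma>) *\<^sub>R w \<sigma>)
      = indicator {c..T} s *\<^sub>R (\<integral>\<sigma>. F s \<sigma> \<partial>lborel)" for s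
  proof (cases "s \<in> {c..T}")
    case True
    have "indicator {c..min s e} \<sigma> *\<^sub>R (K (s - \<sigma>) *\<^sub>R w \<sigma>) = F s \<sigma>" for \<sigma>
    proof (cases "c \<le> \<sigma> \<and> \<sigma> \<le> min s e")
      case True2: True
      then have "Kt (s - \<sigma>) = K (s - \<sigma>)" using True c0 unfolding Kt_def by (auto simp: indicator_def)
      moreover have "wt \<sigma> = w \<sigma>" using True2 unfolding wt_def by (auto simp: indicator_def)
      ultimately show ?thesis using True2 unfolding F_def by (simp add: indicator_def)
    next
      case False
      then have "\<sigma> \<notin> {c..min s e}" by auto
      then show ?thesis using False unfolding F_def by auto
    qed
    then show ?thesis unfolding set_lebesgue_integral_def by simp
  qed simp
  show ?thesis unfolding set_borel_measurable_def eq
    by (rule borel_measurable_scaleR[OF _ Gm]) simp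
qed

end

lemma set_borel_measurable_cong:
  fixes f g :: "'a \<Rightarrow> 'b::{banach,second_countable_topology}"
  assumes "set_borel_measurable M A f" "\<And>x. x \<in> A \<Longrightarrow> f x = g x"
  shows "set_borel_measurable M A g"
proof -
  have "(\<lambda>x. indicator A x *\<^sub>R f x) = (\<lambda>x. indicator A x *\<^sub>R g x)"
    using assms(2) by (auto simp: fun_eq_iff indicator_def)
  then show ?thesis using assms(1) unfolding set_borel_measurable_def by simp
qed

lemma blin_set_meas:
  fixes f :: "real \<Rightarrow> 'a::{banach,second_countable_topology}"
    and L :: "'a \<Rightarrow> 'b::{banach,second_countable_topology}"
  assumes L: "bounded_linear L" and f: "set_borel_measurable lborel A f"
  shows "set_borel_measurable lborel A (\<lambda>s. L (f s))"
proof -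
  have eq: "(\<lambda>s. indicator A s *\<^sub>R L (f s)) = (\<lambda>s. L (indicator A s *\<^sub>R f s))"
    using bounded_linear.linear[OF L] by (simp add: fun_eq_iff linear_scale)
  have Lm: "L \<in> borel_measurable borel"
    by (rule borel_measurable_continuous_onI[OF linear_continuous_on[OF L]])
  show ?thesis unfolding set_borel_measurable_def eq
    using measurable_compose[OF f[unfolded set_borel_measurable_def] Lm] by simp
qed

lemma blin_set_int:
  fixes f :: "real \<Rightarrow> 'a::{banach,second_countable_topology}"
    and L :: "'a \<Rightarrow> 'b::{banach,second_countable_topology}"
  assumes L: "bounded_linear L" and f: "set_integrable lborel A f"
  shows "set_integrable lborel A (\<lambda>s. L (f s))"
proof -
  have eq: "(\<lambda>s. indicator A s *\<^sub>R L (f s)) = (\<lambda>s. L (indicator A s *\<^sub>R f s))"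
    using bounded_linear.linear[OF L] by (simp add: fun_eq_iff linear_scale)
  show ?thesis unfolding set_integrable_def eq
    using integrable_bounded_linear[OF L f[unfolded set_integrable_def]] .
qed

lemma L2c_set_integrable:
  fixes u :: "real \<Rightarrow> 'a::{banach,second_countable_topology}"
  assumes "L2c a b u" shows "set_integrable lborel {a..b} u"
proof (rule set_integrable_bound[OF L2c_norm_integrable[OF assms]])
  show "set_borel_measurable lborel {a..b} u" using assms unfolding L2c_def by simp
qed simp

context vsys begin

definition Iw :: "real \<Rightarrow> (real \<Rightarrow> 'h) \<Rightarrow> real \<Rightarrow> 'h" where
  "Iw a w s = (LINT \<sigma>:{a..s}|lborel. K (s - \<sigma>) *\<^sub>R w \<sigma>)"

definition Ih :: "real \<Rightarrow> (real \<Rightarrow> 'h) \<Rightarrow> real \<Rightarrow> 'h" where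
  "Ih a h s = (LINT \<sigma>:{0..a}|lborel. K (s - \<sigma>) *\<^sub>R h \<sigma>)"

definition rhs :: "real \<Rightarrow> 'h \<Rightarrow> (real \<Rightarrow> 'h) \<Rightarrow> (real \<Rightarrow> 'u) \<Rightarrow> (real \<Rightarrow> 'h) \<Rightarrow> real \<Rightarrow> 'h" where
  "rhs a x0 h u w t = S (t - a) x0
      + (LINT s:{a..t}|lborel. S (t - s) (Iw a w s))
      + (LINT s:{a..t}|lborel. S (t - s) (Ih a h s))
      + (LINT s:{a..t}|lborel. S (t - s) (B (u s)))"

lemma mild_iff:
  "mild_solution S K B a T' x0 h u w \<longleftrightarrow> L2_on a T' w \<and> (\<forall>t\<in>{a..T'}. w t = rhs a x0 h u w t)"
  unfolding mild_solution_def rhs_def Iw_def Ih_def by simp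

lemma L2c_int_mono:
  fixes w :: "real \<Rightarrow> 'a::{banach,second_countable_topology}"
  assumes "L2c a t w" "a \<le> s" "s \<le> t"
  shows "(LINT \<sigma>:{a..s}|lborel. (norm (w \<sigma>))^2) \<le> (LINT \<sigma>:{a..t}|lborel. (norm (w \<sigma>))^2)"
proof -
  have "(LINT \<sigma>:{a..t}|lborel. (norm (w \<sigma>))^2)
     = (LINT \<sigma>:{a..s}|lborel. (norm (w \<sigma>))^2) + (LINT \<sigma>:{s..t}|lborel. (norm (w \<sigma>))^2)"
    using assms unfolding L2c_def by (intro split_int) auto
  moreover have "0 \<le> (LINT \<sigma>:{s..t}|lborel. (norm (w \<sigma>))^2)"
    unfolding set_lebesgue_integral_def by (rule Bochner_Integration.integral_nonneg) simp
  ultimately show ?thesis by simp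
qed

lemma Iw_props:
  assumes a0: "0 \<le> a" and s: "a \<le> s" "s \<le> t" and tT: "t \<le> T" and w: "L2c a t w"
  shows "set_integrable lborel {a..s} (\<lambda>\<sigma>. K (s - \<sigma>) *\<^sub>R w \<sigma>)"
    and "norm (Iw a w s) \<le> sqrt kap * sqrt (LINT \<sigma>:{a..s}|lborel. (norm (w \<sigma>))^2)"
    and "norm (Iw a w s) \<le> sqrt kap * sqrt (LINT \<sigma>:{a..t}|lborel. (norm (w \<sigma>))^2)"
proof -
  have ws: "L2c a s w" using L2c_subset[OF w] s by auto
  have c: "a \<le> s" "0 \<le> s - s" "s - a \<le> T" using s tT a0 by auto
  show "set_integrable lborel {a..s} (\<lambda>\<sigma>. K (s - \<sigma>) *\<^sub>R w \<sigma>)" by (rule conv_bound(1)[OF c ws])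
  show b1: "norm (Iw a w s) \<le> sqrt kap * sqrt (LINT \<sigma>:{a..s}|lborel. (norm (w \<sigma>))^2)"
    unfolding Iw_def by (rule conv_bound(2)[OF c ws])
  also have "\<dots> \<le> sqrt kap * sqrt (LINT \<sigma>:{a..t}|lborel. (norm (w \<sigma>))^2)"
    by (rule mult_left_mono) (use L2c_int_mono[OF w s] kap_nonneg in auto)
  finally show "norm (Iw a w s) \<le> sqrt kap * sqrt (LINT \<sigma>:{a..t}|lborel. (norm (w \<sigma>))^2)" .
qed

lemma Iw_meas:
  assumes a0: "0 \<le> a" and tT: "t \<le> T" and w: "L2c a t w"
  shows "set_borel_measurable lborel {a..t} (Iw a w)"
proof -
  have "set_borel_measurable lborel {a..T} (\<lambda>s. LINT \<sigma>:{a..min s t}|lborel. K (s - \<sigma>) *\<^sub>R w \<sigma>)"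
    by (rule conv_meas[OF a0]) (use w in \<open>simp add: L2c_def\<close>)
  then have "set_borel_measurable lborel {a..t} (\<lambda>s. LINT \<sigma>:{a..min s t}|lborel. K (s - \<sigma>) *\<^sub>R w \<sigma>)"
    by (rule set_borel_measurable_subset) (use tT in auto)
  then show ?thesis
    by (rule set_borel_measurable_cong) (auto simp: Iw_def min_absorb1)
qed

lemma Ih_props:
  assumes a0: "0 \<le> a" and s: "a \<le> s" "s \<le> T" and h: "L2c 0 a h"
  shows "set_integrable lborel {0..a} (\<lambda>\<sigma>. K (s - \<sigma>) *\<^sub>R h \<sigma>)"
    and "norm (Ih a h s) \<le> sqrt kap * sqrt (LINT \<sigma>:{0..a}|lborel. (norm (h \<sigma>))^2)"
proof -
  have c: "0 \<le> a" "0 \<le> s - a" "s - 0 \<le> T" using s a0 by auto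
  show "set_integrable lborel {0..a} (\<lambda>\<sigma>. K (s - \<sigma>) *\<^sub>R h \<sigma>)" by (rule conv_bound(1)[OF c h])
  show "norm (Ih a h s) \<le> sqrt kap * sqrt (LINT \<sigma>:{0..a}|lborel. (norm (h \<sigma>))^2)"
    unfolding Ih_def by (rule conv_bound(2)[OF c h])
qed

lemma Ih_meas:
  assumes a0: "0 \<le> a" and tT: "t \<le> T" and h: "L2c 0 a h"
  shows "set_borel_measurable lborel {a..t} (Ih a h)"
proof -
  have "set_borel_measurable lborel {0..T} (\<lambda>s. LINT \<sigma>:{0..min s a}|lborel. K (s - \<sigma>) *\<^sub>R h \<sigma>)"
    by (rule conv_meas) (use h in \<open>simp_all add: L2c_def\<close>)
  then have "set_borel_measurable lborel {a..t} (\<lambda>s. LINT \<sigma>:{0..min s a}|lborel. K (s - \<sigma>) *\<^sub>R h \<sigma>)"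
    by (rule set_borel_measurable_subset) (use tT a0 in auto)
  then show ?thesis
    by (rule set_borel_measurable_cong) (auto simp: Ih_def min_absorb2)
qed

lemma terms_int:
  assumes a0: "0 \<le> a" and at: "a \<le> t" and tT: "t \<le> T"
    and w: "L2c a t w" and h: "L2c 0 a h" and u: "L2c a t u"
  shows "set_integrable lborel {a..t} (\<lambda>s. S (t - s) (Iw a w s))"
    and "set_integrable lborel {a..t} (\<lambda>s. S (t - s) (Ih a h s))"
    and "set_integrable lborel {a..t} (\<lambda>s. S (t - s) (B (u s)))"
proof -
  have ta: "t - a \<le> T" using a0 tT by simp
  show "set_integrable lborel {a..t} (\<lambda>s. S (t - s) (Iw a w s))"
  proof (rule S_int[OF at ta Iw_meas[OF a0 tT w]])
    show "set_integrable lborel {a..t} (\<lambda>s. norm (Iw a w s))"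
      by (rule set_integrable_bounded[OF set_borel_measurable_norm[OF Iw_meas[OF a0 tT w]],
            where C="sqrt kap * sqrt (LINT \<sigma>:{a..t}|lborel. (norm (w \<sigma>))^2)"])
         (use Iw_props(3)[OF a0 _ _ tT w] in auto)
  qed
  show "set_integrable lborel {a..t} (\<lambda>s. S (t - s) (Ih a h s))"
  proof (rule S_int[OF at ta Ih_meas[OF a0 tT h]])
    show "set_integrable lborel {a..t} (\<lambda>s. norm (Ih a h s))"
      by (rule set_integrable_bounded[OF set_borel_measurable_norm[OF Ih_meas[OF a0 tT h]],
            where C="sqrt kap * sqrt (LINT \<sigma>:{0..a}|lborel. (norm (h \<sigma>))^2)"])
         (use Ih_props(2)[OF a0 _ _ h] tT in auto)
  qed
  have um: "set_borel_measurable lborel {a..t} u" using u unfolding L2c_def by simp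
  have ui: "set_integrable lborel {a..t} u" by (rule L2c_set_integrable[OF u])
  show "set_integrable lborel {a..t} (\<lambda>s. S (t - s) (B (u s)))"
    by (rule S_int[OF at ta blin_set_meas[OF B_lin um] set_integrable_norm[OF blin_set_int[OF B_lin ui]]])
qed

lemma rhs_combine:
  assumes a0: "0 \<le> a" and at: "a \<le> t" and tT: "t \<le> T"
    and w: "L2c a t w" and h: "L2c 0 a h" and u: "L2c a t u"
  shows "set_integrable lborel {a..t} (\<lambda>s. S (t - s) (Iw a w s + Ih a h s + B (u s)))"
    and "rhs a x0 h u w t = S (t - a) x0 + (LINT s:{a..t}|lborel. S (t - s) (Iw a w s + Ih a h s + B (u s)))"
proof -
  note i = terms_int[OF assms]
  have eq: "S (t - s) (Iw a w s + Ih a h s + B (u s))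
      = S (t - s) (Iw a w s) + S (t - s) (Ih a h s) + S (t - s) (B (u s))" if "s \<in> {a..t}" for s
    using that S_linear[of "t - s"] by (simp add: linear_add)
  have i2: "set_integrable lborel {a..t} (\<lambda>s. S (t - s) (Iw a w s) + S (t - s) (Ih a h s) + S (t - s) (B (u s)))"
    using i by (intro set_integral_add(1)) auto
  show "set_integrable lborel {a..t} (\<lambda>s. S (t - s) (Iw a w s + Ih a h s + B (u s)))"
    using i2 by (rule set_integrable_cong[THEN iffD1, rotated -1]) (auto simp: eq)
  have "(LINT s:{a..t}|lborel. S (t - s) (Iw a w s + Ih a h s + B (u s)))
      = (LINT s:{a..t}|lborel. S (t - s) (Iw a w s) + S (t - s) (Ih a h s) + S (t - s) (B (u s)))"
    by (rule set_lebesgue_integral_cong) (auto simp: eq)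
  also have "\<dots> = (LINT s:{a..t}|lborel. S (t - s) (Iw a w s)) + (LINT s:{a..t}|lborel. S (t - s) (Ih a h s))
      + (LINT s:{a..t}|lborel. S (t - s) (B (u s)))"
    using i by (simp add: set_integral_add(2) set_integral_add(1))
  finally show "rhs a x0 h u w t = S (t - a) x0 + (LINT s:{a..t}|lborel. S (t - s) (Iw a w s + Ih a h s + B (u s)))"
    unfolding rhs_def by (simp add: add.assoc)
qed

end

lemma set_integral_blin:
  fixes f :: "real \<Rightarrow> 'a::{banach,second_countable_topology}"
    and L :: "'a \<Rightarrow> 'b::{banach,second_countable_topology}"
  assumes L: "bounded_linear L" and f: "set_integrable lborel A f"
  shows "L (LINT s:A|lborel. f s) = (LINT s:A|lborel. L (f s))"
proof -
  have eq: "(\<lambda>s. indicator A s *\<^sub>R L (f s)) = (\<lambda>s. L (indicator A s *\<^sub>R f s))"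
    using bounded_linear.linear[OF L] by (simp add: fun_eq_iff linear_scale)
  show ?thesis unfolding set_lebesgue_integral_def eq
    using integral_bounded_linear[OF L f[unfolded set_integrable_def]] by simp
qed

context vsys begin

lemma S_comp: "0 \<le> r \<Longrightarrow> 0 \<le> q \<Longrightarrow> S r (S q x) = S (r + q) x"
  using S_semi[of r q] by simp

lemma flow:
  assumes a0: "0 \<le> a" and aa1: "a \<le> a1" and a1t: "a1 \<le> t" and tT: "t \<le> T"
    and z: "L2c a t z" and h: "L2c 0 a h" and u: "L2c a t u"
    and za1: "z a1 = rhs a x0 h u z a1"
  shows "rhs a1 (z a1) (\<lambda>s. if s \<le> a then h s else z s) u z t = rhs a x0 h u z t"
proof -
  define y where "y = (\<lambda>s. if s \<le> a then h s else z s)"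
  define F where "F = (\<lambda>s. Iw a z s + Ih a h s + B (u s))"
  define F1 where "F1 = (\<lambda>s. Iw a1 z s + Ih a1 y s + B (u s))"
  have a10: "0 \<le> a1" using a0 aa1 by simp
  have a1T: "a1 \<le> T" using a1t tT by simp
  have at: "a \<le> t" using aa1 a1t by simp
  have z1: "L2c a a1 z" using L2c_subset[OF z] a1t by auto
  have u1: "L2c a a1 u" using L2c_subset[OF u] a1t by auto
  have z2: "L2c a1 t z" using L2c_subset[OF z] aa1 by auto
  have u2: "L2c a1 t u" using L2c_subset[OF u] aa1 by auto
  have y: "L2c 0 a1 y" unfolding y_def by (rule L2c_splice[OF h z1 a0 aa1])
  have Rt: "rhs a x0 h u z t = S (t - a) x0 + (LINT s:{a..t}|lborel. S (t - s) (F s))"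
    unfolding F_def by (rule rhs_combine(2)[OF a0 at tT z h u])
  have It: "set_integrable lborel {a..t} (\<lambda>s. S (t - s) (F s))"
    unfolding F_def by (rule rhs_combine(1)[OF a0 at tT z h u])
  have Ra1: "z a1 = S (a1 - a) x0 + (LINT s:{a..a1}|lborel. S (a1 - s) (F s))"
    using za1 rhs_combine(2)[OF a0 aa1 a1T z1 h u1] unfolding F_def by simp
  have Ia1: "set_integrable lborel {a..a1} (\<lambda>s. S (a1 - s) (F s))"
    unfolding F_def by (rule rhs_combine(1)[OF a0 aa1 a1T z1 h u1])
  have R1: "rhs a1 (z a1) y u z t = S (t - a1) (z a1) + (LINT s:{a1..t}|lborel. S (t - s) (F1 s))"
    unfolding F1_def by (rule rhs_combine(2)[OF a10 a1t tT z2 y u2])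
  have SL: "bounded_linear (S (t - a1))" using a1t by (intro S_lin) simp
  have "S (t - a1) (z a1) = S (t - a1) (S (a1 - a) x0) + S (t - a1) (LINT s:{a..a1}|lborel. S (a1 - s) (F s))"
    unfolding Ra1 using bounded_linear.linear[OF SL] by (simp add: linear_add)
  also have "S (t - a1) (S (a1 - a) x0) = S (t - a) x0"
    using S_comp[of "t - a1" "a1 - a" x0] a1t aa1 by simp
  also have "S (t - a1) (LINT s:{a..a1}|lborel. S (a1 - s) (F s))
      = (LINT s:{a..a1}|lborel. S (t - a1) (S (a1 - s) (F s)))"
    by (rule set_integral_blin[OF SL Ia1])
  also have "\<dots> = (LINT s:{a..a1}|lborel. S (t - s) (F s))"
  proof (rule set_lebesgue_integral_cong)
    show "\<forall>s. s \<in> {a..a1} \<longrightarrow> S (t - a1) (S (a1 - s) (F s)) = S (t - s) (F s)"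
      using S_comp a1t by auto
  qed simp
  finally have SZ: "S (t - a1) (z a1) = S (t - a) x0 + (LINT s:{a..a1}|lborel. S (t - s) (F s))" .
  have FF: "F s = F1 s" if s: "s \<in> {a1..t}" for s
  proof -
    have s1: "a \<le> s" "s \<le> t" "s \<le> T" using s aa1 tT by auto
    have iw: "set_integrable lborel {a..s} (\<lambda>\<sigma>. K (s - \<sigma>) *\<^sub>R z \<sigma>)"
      by (rule Iw_props(1)[OF a0 s1(1,2) tT z])
    have "Iw a z s = (LINT \<sigma>:{a..a1}|lborel. K (s - \<sigma>) *\<^sub>R z \<sigma>) + Iw a1 z s"
      unfolding Iw_def by (rule split_int[OF iw aa1]) (use s in auto)
    moreover have "Ih a1 y s = Ih a h s + (LINT \<sigma>:{a..a1}|lborel. K (s - \<sigma>) *\<^sub>R z \<sigma>)"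
    proof -
      have iy: "set_integrable lborel {0..a1} (\<lambda>\<sigma>. K (s - \<sigma>) *\<^sub>R y \<sigma>)"
        by (rule Ih_props(1)[OF a10 _ s1(3) y]) (use s in auto)
      have "{0..a1} = {0..a} \<union> {a<..a1}" using a0 aa1 by auto
      then have "Ih a1 y s = (LINT \<sigma>:{0..a}|lborel. K (s - \<sigma>) *\<^sub>R y \<sigma>) + (LINT \<sigma>:{a<..a1}|lborel. K (s - \<sigma>) *\<^sub>R y \<sigma>)"
        unfolding Ih_def using iy
        by (simp, intro set_integral_Un) (auto intro: set_integrable_subset)
      moreover have "(LINT \<sigma>:{0..a}|lborel. K (s - \<sigma>) *\<^sub>R y \<sigma>) = Ih a h s"
        unfolding Ih_def y_def by (rule set_lebesgue_integral_cong) auto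
      moreover have "(LINT \<sigma>:{a<..a1}|lborel. K (s - \<sigma>) *\<^sub>R y \<sigma>) = (LINT \<sigma>:{a<..a1}|lborel. K (s - \<sigma>) *\<^sub>R z \<sigma>)"
        unfolding y_def by (rule set_lebesgue_integral_cong) auto
      moreover have "(LINT \<sigma>:{a<..a1}|lborel. K (s - \<sigma>) *\<^sub>R z \<sigma>) = (LINT \<sigma>:{a..a1}|lborel. K (s - \<sigma>) *\<^sub>R z \<sigma>)"
        by (rule set_integral_discrete_difference[where X="{a}"]) auto
      ultimately show ?thesis by simp
    qed
    ultimately show ?thesis unfolding F_def F1_def by (simp add: algebra_simps)
  qed
  have "rhs a1 (z a1) y u z t = S (t - a) x0 + (LINT s:{a..a1}|lborel. S (t - s) (F s))
        + (LINT s:{a1..t}|lborel. S (t - s) (F s))"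
  proof -
    have "(LINT s:{a1..t}|lborel. S (t - s) (F1 s)) = (LINT s:{a1..t}|lborel. S (t - s) (F s))"
      by (rule set_lebesgue_integral_cong) (auto simp: FF)
    then show ?thesis unfolding R1 SZ by simp
  qed
  also have "\<dots> = rhs a x0 h u z t"
    unfolding Rt using split_int[OF It aa1 a1t] by (simp add: add.assoc)
  finally show ?thesis unfolding y_def .
qed

end

context vsys begin

lemma rhs_cong:
  assumes w: "\<And>s. s \<in> {a..t} \<Longrightarrow> w s = w' s" and u: "\<And>s. s \<in> {a<..t} \<Longrightarrow> u s = u' s"
    and h: "\<And>s. s \<in> {0..a} \<Longrightarrow> h s = h' s"
  shows "rhs a x0 h u w t = rhs a x0 h' u' w' t"
proof -
  have "Iw a w s = Iw a w' s" if "s \<in> {a..t}" for s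
    unfolding Iw_def by (rule set_lebesgue_integral_cong) (use that w in auto)
  then have 1: "(LINT s:{a..t}|lborel. S (t - s) (Iw a w s)) = (LINT s:{a..t}|lborel. S (t - s) (Iw a w' s))"
    by (intro set_lebesgue_integral_cong) auto
  have "Ih a h s = Ih a h' s" for s
    unfolding Ih_def by (rule set_lebesgue_integral_cong) (use h in auto)
  then have 2: "(LINT s:{a..t}|lborel. S (t - s) (Ih a h s)) = (LINT s:{a..t}|lborel. S (t - s) (Ih a h' s))"
    by simp
  have 3: "(LINT s:{a..t}|lborel. S (t - s) (B (u s))) = (LINT s:{a..t}|lborel. S (t - s) (B (u' s)))"
    unfolding set_lebesgue_integral_def
  proof (rule integral_discrete_difference[where X="{a}"])
    fix x assume "x \<notin> {a}"
    then show "indicator {a..t} x *\<^sub>R S (t - x) (B (u x)) = indicator {a..t} x *\<^sub>R S (t - x) (B (u' x))"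
      using u[of x] by (cases "x \<in> {a..t}") auto
  qed auto
  show ?thesis unfolding rhs_def 1 2 3 ..
qed

lemma rhs_point: "rhs a x0 h u w a = x0"
  unfolding rhs_def point_int by (simp add: S_0)

lemma restrict_mild:
  assumes m: "mild_solution S K B a T x0 h u w" and h: "L2c 0 a h" and u: "L2c a T u"
    and a0: "0 \<le> a" and aa1: "a \<le> a1" and a1T: "a1 \<le> T"
  shows "mild_solution S K B a1 T (w a1) (\<lambda>s. if s \<le> a then h s else w s) u w"
proof -
  have w: "L2c a T w" using m unfolding mild_iff by (auto intro: L2_on_imp_L2c)
  have eq: "\<forall>t\<in>{a..T}. w t = rhs a x0 h u w t" using m unfolding mild_iff by simp
  show ?thesis unfolding mild_iff
  proof
    show "L2_on a1 T w" using L2c_imp_L2_on[OF L2c_subset[OF w aa1]] by simp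
    show "\<forall>t\<in>{a1..T}. w t = rhs a1 (w a1) (\<lambda>s. if s \<le> a then h s else w s) u w t"
    proof
      fix t assume t: "t \<in> {a1..T}"
      have "w t = rhs a x0 h u w t" using eq t aa1 by auto
      also have "\<dots> = rhs a1 (w a1) (\<lambda>s. if s \<le> a then h s else w s) u w t"
      proof (rule flow[symmetric, OF a0 aa1 _ _ _ h])
        show "a1 \<le> t" "t \<le> T" using t by auto
        show "L2c a t w" "L2c a t u" using L2c_subset[OF w] L2c_subset[OF u] t by auto
        show "w a1 = rhs a x0 h u w a1" using eq aa1 a1T by auto
      qed
      finally show "w t = rhs a1 (w a1) (\<lambda>s. if s \<le> a then h s else w s) u w t" .
    qed
  qed
qed

lemma splice_mild:
  assumes m: "mild_solution S K B a T x0 h u w"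
    and m1: "mild_solution S K B a1 T (w a1) (\<lambda>s. if s \<le> a then h s else w s) u1 w1"
    and h: "L2c 0 a h" and u: "L2c a T u" and u1: "L2c a1 T u1"
    and a0: "0 \<le> a" and aa1: "a \<le> a1" and a1T: "a1 \<le> T"
  shows "mild_solution S K B a T x0 h (\<lambda>s. if s \<le> a1 then u s else u1 s) (\<lambda>s. if s \<le> a1 then w s else w1 s)"
proof -
  define z where "z = (\<lambda>s. if s \<le> a1 then w s else w1 s)"
  define v where "v = (\<lambda>s. if s \<le> a1 then u s else u1 s)"
  have w: "L2c a T w" using m unfolding mild_iff by (auto intro: L2_on_imp_L2c)
  have w1: "L2c a1 T w1" using m1 unfolding mild_iff by (auto intro: L2_on_imp_L2c)
  have eq: "\<forall>t\<in>{a..T}. w t = rhs a x0 h u w t" using m unfolding mild_iff by simp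
  have eq1: "\<forall>t\<in>{a1..T}. w1 t = rhs a1 (w a1) (\<lambda>s. if s \<le> a then h s else w s) u1 w1 t"
    using m1 unfolding mild_iff by simp
  have w1a1: "w1 a1 = w a1"
  proof -
    have "a1 \<in> {a1..T}" using a1T by simp
    then have "w1 a1 = rhs a1 (w a1) (\<lambda>s. if s \<le> a then h s else w s) u1 w1 a1" using eq1 by blast
    then show ?thesis by (simp only: rhs_point)
  qed
  have z: "L2c a T z" unfolding z_def
    by (rule L2c_splice[OF L2c_subset[OF w] w1 aa1 a1T]) (use a1T in auto)
  have v: "L2c a T v" unfolding v_def
    by (rule L2c_splice[OF L2c_subset[OF u] u1 aa1 a1T]) (use a1T in auto)
  have first: "z t = rhs a x0 h v z t" if t: "t \<in> {a..a1}" for t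
  proof -
    have "z t = w t" using t unfolding z_def by simp
    also have "\<dots> = rhs a x0 h u w t" using eq t a1T by auto
    also have "\<dots> = rhs a x0 h v z t"
      by (rule rhs_cong) (use t in \<open>auto simp: z_def v_def\<close>)
    finally show ?thesis .
  qed
  have second: "z t = rhs a x0 h v z t" if t: "t \<in> {a1<..T}" for t
  proof -
    have "z t = w1 t" using t unfolding z_def by simp
    also have "\<dots> = rhs a1 (w a1) (\<lambda>s. if s \<le> a then h s else w s) u1 w1 t" using eq1 t by auto
    also have "\<dots> = rhs a1 (z a1) (\<lambda>s. if s \<le> a then h s else z s) v z t"
    proof -
      have "z a1 = w a1" unfolding z_def by simp
      moreover have "rhs a1 (w a1) (\<lambda>s. if s \<le> a then h s else w s) u1 w1 t
          = rhs a1 (w a1) (\<lambda>s. if s \<le> a then h s else z s) v z t"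
        by (rule rhs_cong) (use w1a1 aa1 in \<open>auto simp: z_def v_def\<close>)
      ultimately show ?thesis by simp
    qed
    also have "\<dots> = rhs a x0 h v z t"
    proof (rule flow[OF a0 aa1 _ _ _ h])
      show "a1 \<le> t" "t \<le> T" using t by auto
      show "L2c a t z" "L2c a t v" using L2c_subset[OF z] L2c_subset[OF v] t by auto
      show "z a1 = rhs a x0 h v z a1" using first aa1 by auto
    qed
    finally show ?thesis .
  qed
  show ?thesis unfolding mild_iff z_def[symmetric] v_def[symmetric]
  proof
    show "L2_on a T z" by (rule L2c_imp_L2_on[OF z])
    show "\<forall>t\<in>{a..T}. z t = rhs a x0 h v z t"
    proof
      fix t assume "t \<in> {a..T}"
      then show "z t = rhs a x0 h v z t"
        using first second by (cases "t \<le> a1") auto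
    qed
  qed
qed

end

lemma half_comb:
  fixes S0 X1 X2 Y Z1 Z2 :: "'a::real_vector"
  shows "(1/2::real) *\<^sub>R (S0 + X1 + Y + Z1) + (1/2::real) *\<^sub>R (S0 + X2 + Y + Z2)
       = S0 + ((1/2::real) *\<^sub>R X1 + (1/2::real) *\<^sub>R X2) + Y + ((1/2::real) *\<^sub>R Z1 + (1/2::real) *\<^sub>R Z2)"
proof -
  have h: "(1/2::real) *\<^sub>R x + (1/2::real) *\<^sub>R x = x" for x :: 'a
    by (simp add: scaleR_add_left[symmetric])
  have "(1/2::real) *\<^sub>R (S0 + X1 + Y + Z1) + (1/2::real) *\<^sub>R (S0 + X2 + Y + Z2)
     = ((1/2::real) *\<^sub>R S0 + (1/2::real) *\<^sub>R S0) + ((1/2::real) *\<^sub>R X1 + (1/2::real) *\<^sub>R X2)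
       + ((1/2::real) *\<^sub>R Y + (1/2::real) *\<^sub>R Y) + ((1/2::real) *\<^sub>R Z1 + (1/2::real) *\<^sub>R Z2)"
    by (simp only: scaleR_add_right ac_simps)
  then show ?thesis by (simp only: h)
qed

lemma lin_int:
  fixes f g :: "real \<Rightarrow> 'a::{banach,second_countable_topology}"
  assumes f: "set_integrable lborel A f" and g: "set_integrable lborel A g"
  shows "set_integrable lborel A (\<lambda>s. p *\<^sub>R f s + q *\<^sub>R g s)"
    and "(LINT s:A|lborel. p *\<^sub>R f s + q *\<^sub>R g s) = p *\<^sub>R (LINT s:A|lborel. f s) + q *\<^sub>R (LINT s:A|lborel. g s)"
proof -
  have f': "set_integrable lborel A (\<lambda>s. p *\<^sub>R f s)" using f by (rule set_integrable_scaleR_right)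
  have g': "set_integrable lborel A (\<lambda>s. q *\<^sub>R g s)" using g by (rule set_integrable_scaleR_right)
  show "set_integrable lborel A (\<lambda>s. p *\<^sub>R f s + q *\<^sub>R g s)" by (rule set_integral_add(1)[OF f' g'])
  show "(LINT s:A|lborel. p *\<^sub>R f s + q *\<^sub>R g s) = p *\<^sub>R (LINT s:A|lborel. f s) + q *\<^sub>R (LINT s:A|lborel. g s)"
    by (simp only: set_integral_add(2)[OF f' g'] set_integral_scaleR_right)
qed

lemma L2c_lin:
  fixes f g :: "real \<Rightarrow> 'a::{banach,second_countable_topology}"
  assumes f: "L2c a b f" and g: "L2c a b g"
  shows "L2c a b (\<lambda>s. p *\<^sub>R f s + q *\<^sub>R g s)"
proof -
  have fm: "(\<lambda>s. indicator {a..b} s *\<^sub>R f s) \<in> borel_measurable lborel"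
    and gm: "(\<lambda>s. indicator {a..b} s *\<^sub>R g s) \<in> borel_measurable lborel"
    using f g unfolding L2c_def set_borel_measurable_def by auto
  have eq: "(\<lambda>s. indicator {a..b} s *\<^sub>R (p *\<^sub>R f s + q *\<^sub>R g s))
      = (\<lambda>s. p *\<^sub>R (indicator {a..b} s *\<^sub>R f s) + q *\<^sub>R (indicator {a..b} s *\<^sub>R g s))"
    by (simp add: fun_eq_iff algebra_simps)
  have m: "set_borel_measurable lborel {a..b} (\<lambda>s. p *\<^sub>R f s + q *\<^sub>R g s)"
    unfolding set_borel_measurable_def eq
    by (rule borel_measurable_add[OF borel_measurable_scaleR[OF borel_measurable_const fm]
          borel_measurable_scaleR[OF borel_measurable_const gm]])
  have m2: "set_borel_measurable lborel {a..b} (\<lambda>s. (norm (p *\<^sub>R f s + q *\<^sub>R g s))^2)"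
  proof -
    have "set_borel_measurable lborel {a..b} (\<lambda>s. norm (p *\<^sub>R f s + q *\<^sub>R g s))"
      by (rule set_borel_measurable_norm[OF m])
    then have "(\<lambda>s. indicator {a..b} s *\<^sub>R norm (p *\<^sub>R f s + q *\<^sub>R g s)) \<in> borel_measurable lborel"
      unfolding set_borel_measurable_def .
    then have "(\<lambda>s. (indicator {a..b} s *\<^sub>R norm (p *\<^sub>R f s + q *\<^sub>R g s))^2) \<in> borel_measurable lborel"
      by (rule borel_measurable_power)
    moreover have "(\<lambda>s. (indicator {a..b} s *\<^sub>R norm (p *\<^sub>R f s + q *\<^sub>R g s))^2)
        = (\<lambda>s. indicator {a..b} s *\<^sub>R (norm (p *\<^sub>R f s + q *\<^sub>R g s))^2)"
      by (auto simp: fun_eq_iff indicator_def)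
    ultimately show ?thesis unfolding set_borel_measurable_def by simp
  qed
  have fi: "set_integrable lborel {a..b} (\<lambda>s. (norm (f s))^2)"
    and gi: "set_integrable lborel {a..b} (\<lambda>s. (norm (g s))^2)" using f g unfolding L2c_def by auto
  have bi: "set_integrable lborel {a..b} (\<lambda>s. (2 * p^2) *\<^sub>R (norm (f s))^2 + (2 * q^2) *\<^sub>R (norm (g s))^2)"
    by (rule lin_int(1)[OF fi gi])
  have le: "(norm (p *\<^sub>R f s + q *\<^sub>R g s))^2 \<le> (2 * p^2) *\<^sub>R (norm (f s))^2 + (2 * q^2) *\<^sub>R (norm (g s))^2" for s
  proof -
    have n: "norm (p *\<^sub>R f s + q *\<^sub>R g s) \<le> \<bar>p\<bar> * norm (f s) + \<bar>q\<bar> * norm (g s)"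
      using norm_triangle_ineq[of "p *\<^sub>R f s" "q *\<^sub>R g s"] by simp
    have "(norm (p *\<^sub>R f s + q *\<^sub>R g s))^2 \<le> (\<bar>p\<bar> * norm (f s) + \<bar>q\<bar> * norm (g s))^2"
      using n by (intro power_mono) auto
    also have "\<dots> \<le> 2 * (\<bar>p\<bar> * norm (f s))^2 + 2 * (\<bar>q\<bar> * norm (g s))^2"
    proof -
      have "0 \<le> (\<bar>p\<bar> * norm (f s) - \<bar>q\<bar> * norm (g s))^2" by simp
      then show ?thesis by (simp add: power2_eq_square algebra_simps)
    qed
    also have "\<dots> = (2 * p^2) *\<^sub>R (norm (f s))^2 + (2 * q^2) *\<^sub>R (norm (g s))^2"
      by (simp add: power_mult_distrib)
    finally show ?thesis .
  qed
  have "set_integrable lborel {a..b} (\<lambda>s. (norm (p *\<^sub>R f s + q *\<^sub>R g s))^2)"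
  proof (rule set_integrable_bound[OF bi m2])
    show "AE x in lborel. x \<in> {a..b} \<longrightarrow> norm ((norm (p *\<^sub>R f x + q *\<^sub>R g x))^2)
        \<le> norm ((2 * p^2) *\<^sub>R (norm (f x))^2 + (2 * q^2) *\<^sub>R (norm (g x))^2)"
    proof (intro AE_I2 impI)
      fix x
      have "0 \<le> (norm (p *\<^sub>R f x + q *\<^sub>R g x))^2" by simp
      then show "norm ((norm (p *\<^sub>R f x + q *\<^sub>R g x))^2)
        \<le> norm ((2 * p^2) *\<^sub>R (norm (f x))^2 + (2 * q^2) *\<^sub>R (norm (g x))^2)"
        using le[of x] by (simp only: real_norm_def)
    qed
  qed
  then show ?thesis using m unfolding L2c_def by simp
qed

context vsys begin

lemma mid_mild:
  assumes m1: "mild_solution S K B a T x0 h u1 w1" and m2: "mild_solution S K B a T x0 h u2 w2"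
    and h: "L2c 0 a h" and u1: "L2c a T u1" and u2: "L2c a T u2" and a0: "0 \<le> a"
  shows "mild_solution S K B a T x0 h (\<lambda>s. (1/2) *\<^sub>R u1 s + (1/2) *\<^sub>R u2 s) (\<lambda>s. (1/2) *\<^sub>R w1 s + (1/2) *\<^sub>R w2 s)"
proof -
  define um where "um = (\<lambda>s. (1/2::real) *\<^sub>R u1 s + (1/2::real) *\<^sub>R u2 s)"
  define wm where "wm = (\<lambda>s. (1/2::real) *\<^sub>R w1 s + (1/2::real) *\<^sub>R w2 s)"
  have w1: "L2c a T w1" using m1 unfolding mild_iff by (auto intro: L2_on_imp_L2c)
  have w2: "L2c a T w2" using m2 unfolding mild_iff by (auto intro: L2_on_imp_L2c)
  have eq1: "\<forall>t\<in>{a..T}. w1 t = rhs a x0 h u1 w1 t" using m1 unfolding mild_iff by simp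
  have eq2: "\<forall>t\<in>{a..T}. w2 t = rhs a x0 h u2 w2 t" using m2 unfolding mild_iff by simp
  have wmL: "L2c a T wm" unfolding wm_def by (rule L2c_lin[OF w1 w2])
  have key: "rhs a x0 h um wm t = (1/2) *\<^sub>R rhs a x0 h u1 w1 t + (1/2) *\<^sub>R rhs a x0 h u2 w2 t"
    if t: "t \<in> {a..T}" for t
  proof -
    have at: "a \<le> t" and tT: "t \<le> T" using t by auto
    have w1t: "L2c a t w1" and w2t: "L2c a t w2" using L2c_subset[OF w1] L2c_subset[OF w2] tT by auto
    have u1t: "L2c a t u1" and u2t: "L2c a t u2" using L2c_subset[OF u1] L2c_subset[OF u2] tT by auto
    note T1 = terms_int[OF a0 at tT w1t h u1t]
    note T2 = terms_int[OF a0 at tT w2t h u2t]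
    have Iwm: "Iw a wm s = (1/2) *\<^sub>R Iw a w1 s + (1/2) *\<^sub>R Iw a w2 s" if s: "s \<in> {a..t}" for s
    proof -
      have i1: "set_integrable lborel {a..s} (\<lambda>\<sigma>. K (s - \<sigma>) *\<^sub>R w1 \<sigma>)"
        using Iw_props(1)[OF a0 _ _ tT w1t] s by auto
      have i2: "set_integrable lborel {a..s} (\<lambda>\<sigma>. K (s - \<sigma>) *\<^sub>R w2 \<sigma>)"
        using Iw_props(1)[OF a0 _ _ tT w2t] s by auto
      have "Iw a wm s = (LINT \<sigma>:{a..s}|lborel. (1/2) *\<^sub>R (K (s - \<sigma>) *\<^sub>R w1 \<sigma>) + (1/2) *\<^sub>R (K (s - \<sigma>) *\<^sub>R w2 \<sigma>))"
        unfolding Iw_def wm_def by (simp add: scaleR_add_right)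
      also have "\<dots> = (1/2) *\<^sub>R Iw a w1 s + (1/2) *\<^sub>R Iw a w2 s"
        unfolding Iw_def by (rule lin_int(2)[OF i1 i2])
      finally show ?thesis .
    qed
    have A: "(LINT s:{a..t}|lborel. S (t - s) (Iw a wm s))
        = (1/2) *\<^sub>R (LINT s:{a..t}|lborel. S (t - s) (Iw a w1 s)) + (1/2) *\<^sub>R (LINT s:{a..t}|lborel. S (t - s) (Iw a w2 s))"
    proof -
      have "(LINT s:{a..t}|lborel. S (t - s) (Iw a wm s))
          = (LINT s:{a..t}|lborel. (1/2) *\<^sub>R S (t - s) (Iw a w1 s) + (1/2) *\<^sub>R S (t - s) (Iw a w2 s))"
      proof (rule set_lebesgue_integral_cong)
        show "\<forall>s. s \<in> {a..t} \<longrightarrow> S (t - s) (Iw a wm s) = (1/2) *\<^sub>R S (t - s) (Iw a w1 s) + (1/2) *\<^sub>R S (t - s) (Iw a w2 s)"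
          using Iwm S_linear by (auto simp: linear_add linear_scale)
      qed simp
      then show ?thesis using lin_int(2)[OF T1(1) T2(1)] by simp
    qed
    have C: "(LINT s:{a..t}|lborel. S (t - s) (B (um s)))
        = (1/2) *\<^sub>R (LINT s:{a..t}|lborel. S (t - s) (B (u1 s))) + (1/2) *\<^sub>R (LINT s:{a..t}|lborel. S (t - s) (B (u2 s)))"
    proof -
      have "(LINT s:{a..t}|lborel. S (t - s) (B (um s)))
          = (LINT s:{a..t}|lborel. (1/2) *\<^sub>R S (t - s) (B (u1 s)) + (1/2) *\<^sub>R S (t - s) (B (u2 s)))"
      proof (rule set_lebesgue_integral_cong)
        show "\<forall>s. s \<in> {a..t} \<longrightarrow> S (t - s) (B (um s)) = (1/2) *\<^sub>R S (t - s) (B (u1 s)) + (1/2) *\<^sub>R S (t - s) (B (u2 s))"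
          using S_linear bounded_linear.linear[OF B_lin] unfolding um_def by (auto simp: linear_add linear_scale)
      qed simp
      then show ?thesis using lin_int(2)[OF T1(3) T2(3)] by simp
    qed
    show ?thesis unfolding rhs_def A C by (rule half_comb[symmetric])
  qed
  show ?thesis unfolding mild_iff um_def[symmetric] wm_def[symmetric]
  proof
    show "L2_on a T wm" by (rule L2c_imp_L2_on[OF wmL])
    show "\<forall>t\<in>{a..T}. wm t = rhs a x0 h um wm t"
      using key eq1 eq2 unfolding wm_def by auto
  qed
qed

end

context vsys begin

lemma ind_int:
  fixes C :: real
  assumes ab: "a \<le> b" and bt: "b \<le> t"
  shows "set_integrable lborel {a..t} (\<lambda>s. C * indicator {b<..} s)"
    and "(LINT s:{a..t}|lborel. C * indicator {b<..} s) = C * (t - b)"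
proof -
  have m: "set_borel_measurable lborel {a..t} (\<lambda>s. C * indicator {b<..} s)"
    unfolding set_borel_measurable_def
    by measurable
  show i: "set_integrable lborel {a..t} (\<lambda>s. C * indicator {b<..} s)"
    by (rule set_integrable_bounded[OF m, where C="\<bar>C\<bar>"]) (auto simp: indicator_def)
  have "(LINT s:{a..t}|lborel. C * indicator {b<..} s)
      = (LINT s:{a..b}|lborel. C * indicator {b<..} s) + (LINT s:{b..t}|lborel. C * indicator {b<..} s)"
    by (rule split_int[OF i ab bt])
  also have "(LINT s:{a..b}|lborel. C * indicator {b<..} s) = (LINT s:{a..b}|lborel. (0::real))"
    by (rule set_lebesgue_integral_cong) auto
  also have "(LINT s:{b..t}|lborel. C * indicator {b<..} s) = (LINT s:{b..t}|lborel. C)"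
    unfolding set_lebesgue_integral_def
    by (rule integral_discrete_difference[where X="{b}"]) (auto simp: indicator_def)
  also have "(LINT s:{b..t}|lborel. C) = measure lborel {b..t} *\<^sub>R C"
    by (rule set_integral_const) (auto simp: emeasure_lborel_Icc_eq)
  finally show "(LINT s:{a..t}|lborel. C * indicator {b<..} s) = C * (t - b)"
    using bt by simp
qed


lemma uniq_zero:
  assumes a0: "0 \<le> a" and aT: "a \<le> T" and d: "L2c a T d"
    and eq: "\<forall>t\<in>{a..T}. d t = (LINT s:{a..t}|lborel. S (t - s) (Iw a d s))"
  shows "\<forall>t\<in>{a..T}. d t = 0"
proof -
  define c where "c = M0 * sqrt kap"
  have c0: "0 \<le> c" unfolding c_def using M0_nonneg kap_nonneg by simp
  define \<delta> where "\<delta> = 1 / (c^2 + 1)"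
  have cc: "0 < c^2 + 1" using zero_le_power2[of c] by linarith
  have dpos: "0 < \<delta>" unfolding \<delta>_def using cc by simp
  have dle1: "\<delta> \<le> 1"
  proof -
    have "1 / (c^2+1) \<le> 1 / 1" by (rule divide_left_mono) (use cc in auto)
    then show ?thesis unfolding \<delta>_def by simp
  qed
  have small: "c^2 * \<delta>^3 < 1"
  proof -
    have "\<delta>^3 \<le> \<delta>" using dpos dle1 by (simp add: power_le_one power3_eq_cube mult_le_one)
    then have "c^2 * \<delta>^3 \<le> c^2 * \<delta>" by (simp add: mult_left_mono)
    also have "\<dots> = c^2 / (c^2 + 1)" unfolding \<delta>_def by simp
    also have "\<dots> < 1" using cc by (simp add: divide_less_eq)
    finally show ?thesis .
  qed
  have step: "\<forall>t\<in>{a..T}. t \<le> a + real n * \<delta> \<longrightarrow> d t = 0" for n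
  proof (induction n)
    case 0
    show ?case
    proof (intro ballI impI)
      fix t assume "t \<in> {a..T}" "t \<le> a + real 0 * \<delta>"
      then have ta: "t = a" by simp
      have "a \<in> {a..T}" using aT by simp
      then have "d a = (LINT s:{a..a}|lborel. S (a - s) (Iw a d s))" using eq by blast
      then have "d a = 0" by (simp only: point_int)
      then show "d t = 0" using ta by simp
    qed
  next
    case (Suc n)
    define b where "b = a + real n * \<delta>"
    have ab: "a \<le> b" unfolding b_def using dpos by simp
    have IH: "\<And>t. t \<in> {a..T} \<Longrightarrow> t \<le> b \<Longrightarrow> d t = 0" using Suc.IH unfolding b_def by blast
    show ?case
    proof (cases "T \<le> b")
      case True
      then show ?thesis using IH by auto
    next
      case False
      define e where "e = min T (b + \<delta>)"
      have be: "b \<le> e" and eT: "e \<le> T" and ae: "a \<le> e" and ebd: "e \<le> b + \<delta>"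
        using False dpos ab unfolding e_def by auto
      have de: "L2c a e d" using L2c_subset[OF d] eT by auto
      define N2 where "N2 = (LINT \<sigma>:{a..e}|lborel. (norm (d \<sigma>))^2)"
      have N0: "0 \<le> N2" unfolding N2_def set_lebesgue_integral_def
        by (rule Bochner_Integration.integral_nonneg) simp
      define C where "C = c * sqrt N2"
      have C0: "0 \<le> C" unfolding C_def using c0 N0 by simp
      have bound: "norm (d t) \<le> C * \<delta>" if t: "t \<in> {a..e}" for t
      proof (cases "t \<le> b")
        case True
        then show ?thesis using IH t eT C0 dpos by auto
      next
        case False
        have tT: "t \<le> T" using t eT by simp
        have "d t = (LINT s:{a..t}|lborel. S (t - s) (Iw a d s))" using eq t eT by auto
        then have "norm (d t) = norm (LINT s:{a..t}|lborel. S (t - s) (Iw a d s))" by simp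
        also have "\<dots> \<le> (LINT s:{a..t}|lborel. C * indicator {b<..} s)"
        proof (rule norm_set_integral_le)
          show "set_integrable lborel {a..t} (\<lambda>s. C * indicator {b<..} s)"
            using ind_int(1)[OF ab] False by simp
          fix s assume s: "s \<in> {a..t}"
          show "norm (S (t - s) (Iw a d s)) \<le> C * indicator {b<..} s"
          proof (cases "s \<le> b")
            case True
            have "Iw a d s = (LINT \<sigma>:{a..s}|lborel. (0::'h))"
              unfolding Iw_def by (rule set_lebesgue_integral_cong) (use IH True s tT in auto)
            then have "Iw a d s = 0" by simp
            then show ?thesis using True linear_0[OF S_linear[of "t - s"]] s by simp
          next
            case False
            have "norm (S (t - s) (Iw a d s)) \<le> M0 * norm (Iw a d s)"
              using s tT a0 by (intro M0_bound) auto
            also have "\<dots> \<le> M0 * (sqrt kap * sqrt (LINT \<sigma>:{a..e}|lborel. (norm (d \<sigma>))^2))"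
              by (rule mult_left_mono[OF Iw_props(3)[OF a0 _ _ eT de] M0_nonneg]) (use s t in auto)
            also have "\<dots> = C * indicator {b<..} s" using False unfolding C_def c_def N2_def by simp
            finally show ?thesis .
          qed
        qed simp
        also have "\<dots> = C * (t - b)" using ind_int(2)[OF ab] False by simp
        also have "\<dots> \<le> C * \<delta>" using C0 t ebd by (intro mult_left_mono) auto
        finally show ?thesis .
      qed
      have "N2 \<le> (LINT \<sigma>:{a..e}|lborel. (C * \<delta>)^2 * indicator {b<..} \<sigma>)"
        unfolding N2_def
      proof (rule set_integral_mono)
        show "set_integrable lborel {a..e} (\<lambda>\<sigma>. (norm (d \<sigma>))^2)" using de unfolding L2c_def by simp
        show "set_integrable lborel {a..e} (\<lambda>\<sigma>. (C * \<delta>)^2 * indicator {b<..} \<sigma>)"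
          by (rule ind_int(1)[OF ab be])
        fix \<sigma> assume s: "\<sigma> \<in> {a..e}"
        show "(norm (d \<sigma>))^2 \<le> (C * \<delta>)^2 * indicator {b<..} \<sigma>"
        proof (cases "\<sigma> \<le> b")
          case True
          then show ?thesis using IH s eT by auto
        next
          case False
          then show ?thesis using bound[OF s] by (simp add: power_mono)
        qed
      qed
      also have "\<dots> = (C * \<delta>)^2 * (e - b)" by (rule ind_int(2)[OF ab be])
      also have "\<dots> \<le> (C * \<delta>)^2 * \<delta>" using ebd by (intro mult_left_mono) auto
      also have "\<dots> = (c^2 * \<delta>^3) * N2" unfolding C_def using N0
        by (simp add: power_mult_distrib power3_eq_cube power2_eq_square)
      finally have "N2 \<le> (c^2 * \<delta>^3) * N2" .
      then have "N2 = 0" using small N0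
        by (smt (verit, best) mult_le_cancel_right1)
      then have C00: "C = 0" unfolding C_def by simp
      show ?thesis
      proof (intro ballI impI)
        fix t assume t: "t \<in> {a..T}" "t \<le> a + real (Suc n) * \<delta>"
        then have "t \<le> e" unfolding e_def b_def by (auto simp: algebra_simps)
        then show "d t = 0" using bound[of t] t C00 by simp
      qed
    qed
  qed
  show ?thesis
  proof
    fix t assume t: "t \<in> {a..T}"
    obtain n :: nat where "(t - a) / \<delta> \<le> real n" using real_arch_simple by blast
    then have "t - a \<le> real n * \<delta>" using dpos by (simp add: field_simps)
    then show "d t = 0" using step[of n] t by auto
  qed
qed

end

lemma set_integral_cong_AE':
  fixes f g :: "real \<Rightarrow> 'a::{banach,second_countable_topology}"
  assumes fm: "set_borel_measurable lborel A f" and gm: "set_borel_measurable lborel A g"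
    and ae: "AE x in lborel. x \<in> A \<longrightarrow> f x = g x"
  shows "(LINT x:A|lborel. f x) = (LINT x:A|lborel. g x)"
  unfolding set_lebesgue_integral_def
proof (rule integral_cong_AE)
  show "(\<lambda>x. indicator A x *\<^sub>R f x) \<in> borel_measurable lborel" using fm unfolding set_borel_measurable_def .
  show "(\<lambda>x. indicator A x *\<^sub>R g x) \<in> borel_measurable lborel" using gm unfolding set_borel_measurable_def .
  show "AE x in lborel. indicator A x *\<^sub>R f x = indicator A x *\<^sub>R g x"
    using ae by eventually_elim (auto simp: indicator_def)
qed

lemma set_integrable_imp_meas:
  fixes f :: "real \<Rightarrow> 'a::{banach,second_countable_topology}"
  shows "set_integrable lborel A f \<Longrightarrow> set_borel_measurable lborel A f"
  unfolding set_integrable_def set_borel_measurable_def by (rule borel_measurable_integrable)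

lemma cost_int:
  fixes Q :: "'h::{real_inner,banach,second_countable_topology} \<Rightarrow> 'h"
    and u :: "real \<Rightarrow> 'u::{real_inner,banach,second_countable_topology}"
  assumes Q: "bounded_linear Q" and w: "L2c a b w" and u: "L2c a b u"
  shows "set_integrable lborel {a..b} (\<lambda>t. inner (Q (w t)) (w t) + (norm (u t))^2)"
proof -
  obtain KQ where KQ: "KQ \<ge> 0" "\<And>x. norm (Q x) \<le> norm x * KQ"
    using bounded_linear.nonneg_bounded[OF Q] by blast
  have wm: "(\<lambda>t. indicator {a..b} t *\<^sub>R w t) \<in> borel_measurable lborel"
    using w unfolding L2c_def set_borel_measurable_def by simp
  have Qm: "Q \<in> borel_measurable borel"
    by (rule borel_measurable_continuous_onI[OF linear_continuous_on[OF Q]])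
  have eq: "(\<lambda>t. indicator {a..b} t *\<^sub>R inner (Q (w t)) (w t))
      = (\<lambda>t. inner (Q (indicator {a..b} t *\<^sub>R w t)) (indicator {a..b} t *\<^sub>R w t))"
    using bounded_linear.linear[OF Q] by (auto simp: fun_eq_iff indicator_def linear_0)
  have m: "set_borel_measurable lborel {a..b} (\<lambda>t. inner (Q (w t)) (w t))"
    unfolding set_borel_measurable_def eq
    by (rule borel_measurable_inner[OF measurable_compose[OF wm Qm] wm])
  have i2: "set_integrable lborel {a..b} (\<lambda>t. KQ * (norm (w t))^2)"
    using w unfolding L2c_def by simp
  have i1: "set_integrable lborel {a..b} (\<lambda>t. inner (Q (w t)) (w t))"
  proof (rule set_integrable_bound[OF i2 m])
    show "AE x in lborel. x \<in> {a..b} \<longrightarrow> norm (inner (Q (w x)) (w x)) \<le> norm (KQ * (norm (w x))^2)"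
    proof (intro AE_I2 impI)
      fix x
      have "norm (inner (Q (w x)) (w x)) \<le> norm (Q (w x)) * norm (w x)"
        using Cauchy_Schwarz_ineq2 by simp
      also have "\<dots> \<le> norm (w x) * KQ * norm (w x)" using KQ(2) by (simp add: mult_right_mono)
      also have "\<dots> = norm (KQ * (norm (w x))^2)" using KQ(1) by (simp add: power2_eq_square)
      finally show "norm (inner (Q (w x)) (w x)) \<le> norm (KQ * (norm (w x))^2)" .
    qed
  qed
  have i3: "set_integrable lborel {a..b} (\<lambda>t. (norm (u t))^2)" using u unfolding L2c_def by simp
  show ?thesis by (rule set_integral_add(1)[OF i1 i3])
qed

lemma quad_mid:
  fixes Q :: "'h::real_inner \<Rightarrow> 'h"
  assumes Q: "bounded_linear Q"
  shows "inner (Q ((1/2) *\<^sub>R x + (1/2) *\<^sub>R y)) ((1/2) *\<^sub>R x + (1/2) *\<^sub>R y)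
    = (1/2) * inner (Q x) x + (1/2) * inner (Q y) y - (1/4) * inner (Q (x - y)) (x - y)"
proof -
  have l: "linear Q" using Q by (rule bounded_linear.linear)
  have e1: "Q ((1/2) *\<^sub>R x + (1/2) *\<^sub>R y) = (1/2) *\<^sub>R Q x + (1/2) *\<^sub>R Q y" using l by (simp add: linear_add linear_scale)
  have e2: "Q (x - y) = Q x - Q y" using l by (simp add: linear_diff)
  show ?thesis unfolding e1 e2
    by (simp add: inner_add_left inner_add_right inner_diff_left inner_diff_right algebra_simps)
qed

lemma norm_mid:
  fixes x y :: "'a::real_inner"
  shows "(norm ((1/2) *\<^sub>R x + (1/2) *\<^sub>R y))^2
    = (1/2) * (norm x)^2 + (1/2) * (norm y)^2 - (1/4) * (norm (x - y))^2"
  using quad_mid[OF bounded_linear_ident, of x y] by (simp add: power2_norm_eq_inner)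

theorem proposition3p3:
  fixes S :: "real \<Rightarrow> 'h::{real_inner,banach,second_countable_topology} \<Rightarrow> 'h"
    and A :: "'h \<Rightarrow> 'h" and DA :: "'h set"
    and Jh :: "'h \<Rightarrow> 'h" and Ju :: "'u::{real_inner,banach,second_countable_topology} \<Rightarrow> 'u"
    and B :: "'u \<Rightarrow> 'h"
    and Q :: "'h \<Rightarrow> 'h" and K :: "real \<Rightarrow> real"
    and T C \<omega> \<tau> \<tau>1 :: real
    and \<xi>0 :: 'h and \<xi> :: "real \<Rightarrow> 'h"
    and uh u1 :: "real \<Rightarrow> 'u" and wh w1 :: "real \<Rightarrow> 'h"
  assumes "T > 0"
    and "complex_structure Jh" and "complex_structure Ju"
    and "C0_semigroup S" and "\<forall>t\<ge>0. \<forall>x. S t (Jh x) = Jh (S t x)"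
    and "generator S DA A"
    and "\<forall>t\<ge>0. \<forall>x. norm (S t x) \<le> C * exp (\<omega> * t) * norm x"
    and "L2_on 0 T K"
    and "bounded_linear B" and "\<forall>x. B (Ju x) = Jh (B x)"
    and "bounded_linear Q" and "\<forall>x. Q (Jh x) = Jh (Q x)"
    and "\<forall>x y. inner (Q x) y = inner x (Q y)" and "\<forall>x. inner (Q x) x \<ge> 0"
    and "\<tau> \<in> {0<..<T}" and "L2_on 0 \<tau> \<xi>"
    and "optimal_pair S K B Q \<tau> T \<xi>0 \<xi> uh wh"
    and "\<tau>1 \<in> {\<tau><..<T}"
    and "optimal_pair S K B Q \<tau>1 T (wh \<tau>1) (\<lambda>s. if s \<le> \<tau> then \<xi> s else wh s) u1 w1"
  shows "(AE t in lborel. t \<in> {\<tau>1<..<T} \<longrightarrow> uh t = u1 t) \<and> (\<forall>t\<in>{\<tau>1<..<T}. wh t = w1 t)"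
proof -
  note asm = assms
  define M0 where "M0 = \<bar>C\<bar> * exp (\<bar>\<omega>\<bar> * T)"
  have sg: "C0_semigroup S" by (rule asm(4))
  have l1: "T > 0" by (rule asm(1))
  have l2: "\<And>t. 0 \<le> t \<Longrightarrow> bounded_linear (S t)" using sg unfolding C0_semigroup_def by blast
  have l3: "S 0 = id" using sg unfolding C0_semigroup_def by blast
  have l4: "\<And>t s. 0 \<le> t \<Longrightarrow> 0 \<le> s \<Longrightarrow> S (t + s) = S t \<circ> S s" using sg unfolding C0_semigroup_def by blast
  have l5: "\<And>x. continuous_on {0..} (\<lambda>t. S t x)" using sg unfolding C0_semigroup_def by blast
  have l6: "0 \<le> M0" unfolding M0_def by simp
  have l8: "L2c 0 T K" by (rule L2_on_imp_L2c[OF asm(8)])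
  have l9: "bounded_linear B" by (rule asm(9))
  have l7: "norm (S t x) \<le> M0 * norm x" if t: "0 \<le> t" "t \<le> T" for t x
  proof -
    have "norm (S t x) \<le> C * exp (\<omega> * t) * norm x" using asm(7) t by blast
    also have "\<dots> \<le> M0 * norm x"
    proof (rule mult_right_mono)
      have "\<omega> * t \<le> \<bar>\<omega>\<bar> * T"
      proof -
        have "\<omega> * t \<le> \<bar>\<omega>\<bar> * t" using t by (intro mult_right_mono) auto
        also have "\<dots> \<le> \<bar>\<omega>\<bar> * T" using t by (intro mult_left_mono) auto
        finally show ?thesis .
      qed
      then have "exp (\<omega> * t) \<le> exp (\<bar>\<omega>\<bar> * T)" by simp
      then have "\<bar>C\<bar> * exp (\<omega> * t) \<le> \<bar>C\<bar> * exp (\<bar>\<omega>\<bar> * T)" by (intro mult_left_mono) auto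
      moreover have "C * exp (\<omega> * t) \<le> \<bar>C\<bar> * exp (\<omega> * t)" by (intro mult_right_mono) auto
      ultimately show "C * exp (\<omega> * t) \<le> M0" unfolding M0_def by linarith
    qed simp
    finally show ?thesis .
  qed
  interpret vsys S K B T M0 by (rule vsys.intro[OF l1 l2 l3 l4 l5 l6 l7 l8 l9])
  have Q: "bounded_linear Q" by (rule asm(11))
  have Qpos: "\<And>x. 0 \<le> inner (Q x) x" using asm(14) by blast
  have tau: "0 < \<tau>" "\<tau> < T" using asm(15) by auto
  have tau1: "\<tau> < \<tau>1" "\<tau>1 < T" using asm(18) by auto
  define y where "y = (\<lambda>s. if s \<le> \<tau> then \<xi> s else wh s)"
  have o1: "L2_on \<tau> T uh" "mild_solution S K B \<tau> T \<xi>0 \<xi> uh wh"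
    "\<And>v z. L2_on \<tau> T v \<Longrightarrow> mild_solution S K B \<tau> T \<xi>0 \<xi> v z \<Longrightarrow> cost Q \<tau> T uh wh \<le> cost Q \<tau> T v z"
    using asm(17) unfolding optimal_pair_def by auto
  have o2: "L2_on \<tau>1 T u1" "mild_solution S K B \<tau>1 T (wh \<tau>1) y u1 w1"
    "\<And>v z. L2_on \<tau>1 T v \<Longrightarrow> mild_solution S K B \<tau>1 T (wh \<tau>1) y v z \<Longrightarrow> cost Q \<tau>1 T u1 w1 \<le> cost Q \<tau>1 T v z"
    using asm(19) unfolding optimal_pair_def y_def by auto
  have uhL: "L2c \<tau> T uh" by (rule L2_on_imp_L2c[OF o1(1)])
  have u1L: "L2c \<tau>1 T u1" by (rule L2_on_imp_L2c[OF o2(1)])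
  have whL: "L2c \<tau> T wh" using o1(2) unfolding mild_iff by (auto intro: L2_on_imp_L2c)
  have w1L: "L2c \<tau>1 T w1" using o2(2) unfolding mild_iff by (auto intro: L2_on_imp_L2c)
  have xiL: "L2c 0 \<tau> \<xi>" by (rule L2_on_imp_L2c[OF asm(16)])
  have uh1L: "L2c \<tau>1 T uh" using L2c_subset[OF uhL] tau1 by auto
  have wh1L: "L2c \<tau>1 T wh" using L2c_subset[OF whL] tau1 by auto
  have yL: "L2c 0 \<tau>1 y" unfolding y_def
    by (rule L2c_splice[OF xiL L2c_subset[OF whL]]) (use tau tau1 in auto)
  have mres: "mild_solution S K B \<tau>1 T (wh \<tau>1) y uh wh"
    unfolding y_def by (rule restrict_mild[OF o1(2) xiL uhL]) (use tau tau1 in auto)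
  have c1: "cost Q \<tau>1 T u1 w1 \<le> cost Q \<tau>1 T uh wh"
    by (rule o2(3)[OF L2c_imp_L2_on[OF uh1L] mres])
  define v where "v = (\<lambda>s. if s \<le> \<tau>1 then uh s else u1 s)"
  define z where "z = (\<lambda>s. if s \<le> \<tau>1 then wh s else w1 s)"
  have msp: "mild_solution S K B \<tau> T \<xi>0 \<xi> v z"
    unfolding v_def z_def
    by (rule splice_mild[OF o1(2) o2(2)[unfolded y_def] xiL uhL u1L]) (use tau tau1 in auto)
  have vL: "L2c \<tau> T v" unfolding v_def
    by (rule L2c_splice[OF L2c_subset[OF uhL] u1L]) (use tau1 in auto)
  have zL: "L2c \<tau> T z" unfolding z_def
    by (rule L2c_splice[OF L2c_subset[OF whL] w1L]) (use tau1 in auto)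
  have c2: "cost Q \<tau> T uh wh \<le> cost Q \<tau> T v z"
    by (rule o1(3)[OF L2c_imp_L2_on[OF vL] msp])
  define fh where "fh = (\<lambda>t. inner (Q (wh t)) (wh t) + (norm (uh t))^2)"
  define f1 where "f1 = (\<lambda>t. inner (Q (w1 t)) (w1 t) + (norm (u1 t))^2)"
  define fz where "fz = (\<lambda>t. inner (Q (z t)) (z t) + (norm (v t))^2)"
  have ih: "set_integrable lborel {\<tau>..T} fh" unfolding fh_def by (rule cost_int[OF Q whL uhL])
  have iz: "set_integrable lborel {\<tau>..T} fz" unfolding fz_def by (rule cost_int[OF Q zL vL])
  have tt: "\<tau> \<le> \<tau>1" "\<tau>1 \<le> T" using tau1 by auto
  have costh: "cost Q \<tau> T uh wh = (LINT t:{\<tau>..\<tau>1}|lborel. fh t) + cost Q \<tau>1 T uh wh"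
    unfolding cost_def fh_def[symmetric] by (rule split_int[OF ih tt])
  have costz: "cost Q \<tau> T v z = (LINT t:{\<tau>..\<tau>1}|lborel. fh t) + cost Q \<tau>1 T u1 w1"
  proof -
    have "cost Q \<tau> T v z = (LINT t:{\<tau>..\<tau>1}|lborel. fz t) + (LINT t:{\<tau>1..T}|lborel. fz t)"
      unfolding cost_def fz_def[symmetric] by (rule split_int[OF iz tt])
    moreover have "(LINT t:{\<tau>..\<tau>1}|lborel. fz t) = (LINT t:{\<tau>..\<tau>1}|lborel. fh t)"
      by (rule set_lebesgue_integral_cong) (auto simp: fz_def fh_def z_def v_def)
    moreover have "(LINT t:{\<tau>1..T}|lborel. fz t) = cost Q \<tau>1 T u1 w1"
      unfolding cost_def f1_def[symmetric] set_lebesgue_integral_def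
    proof (rule integral_discrete_difference[where X="{\<tau>1}"])
      fix x assume "x \<notin> {\<tau>1}"
      then show "indicator {\<tau>1..T} x *\<^sub>R fz x = indicator {\<tau>1..T} x *\<^sub>R f1 x"
        by (cases "x \<in> {\<tau>1..T}") (auto simp: fz_def f1_def z_def v_def)
    qed auto
    ultimately show ?thesis by simp
  qed
  have ceq: "cost Q \<tau>1 T uh wh = cost Q \<tau>1 T u1 w1" using c1 c2 costh costz by simp
  define um where "um = (\<lambda>s. (1/2::real) *\<^sub>R uh s + (1/2::real) *\<^sub>R u1 s)"
  define wm where "wm = (\<lambda>s. (1/2::real) *\<^sub>R wh s + (1/2::real) *\<^sub>R w1 s)"
  have t10: "0 \<le> \<tau>1" using tau tau1 by simp
  have mm: "mild_solution S K B \<tau>1 T (wh \<tau>1) y um wm"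
    unfolding um_def wm_def by (rule mid_mild[OF mres o2(2) yL uh1L u1L t10])
  have umL: "L2c \<tau>1 T um" unfolding um_def by (rule L2c_lin[OF uh1L u1L])
  have c3: "cost Q \<tau>1 T u1 w1 \<le> cost Q \<tau>1 T um wm"
    by (rule o2(3)[OF L2c_imp_L2_on[OF umL] mm])
  define dw where "dw = (\<lambda>s. wh s - w1 s)"
  define du where "du = (\<lambda>s. uh s - u1 s)"
  have dwL: "L2c \<tau>1 T dw"
    by (rule L2c_cong[OF L2c_lin[OF wh1L w1L, of 1 "-1"]]) (simp add: dw_def)
  have duL: "L2c \<tau>1 T du"
    by (rule L2c_cong[OF L2c_lin[OF uh1L u1L, of 1 "-1"]]) (simp add: du_def)
  define g where "g = (\<lambda>t. inner (Q (dw t)) (dw t) + (norm (du t))^2)"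
  have ih1: "set_integrable lborel {\<tau>1..T} fh" unfolding fh_def by (rule cost_int[OF Q wh1L uh1L])
  have i11: "set_integrable lborel {\<tau>1..T} f1" unfolding f1_def by (rule cost_int[OF Q w1L u1L])
  have ig: "set_integrable lborel {\<tau>1..T} g" unfolding g_def by (rule cost_int[OF Q dwL duL])
  have fm_eq: "inner (Q (wm t)) (wm t) + (norm (um t))^2 = (1/2) * fh t + (1/2) * f1 t - (1/4) * g t" for t
    unfolding wm_def um_def fh_def f1_def g_def dw_def du_def quad_mid[OF Q] norm_mid
    by (simp add: algebra_simps)
  have "cost Q \<tau>1 T um wm = (LINT t:{\<tau>1..T}|lborel. (1/2) * fh t + (1/2) * f1 t - (1/4) * g t)"
    unfolding cost_def fm_eq ..
  also have "\<dots> = (1/2) * cost Q \<tau>1 T uh wh + (1/2) * cost Q \<tau>1 T u1 w1 - (1/4) * (LINT t:{\<tau>1..T}|lborel. g t)"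
  proof -
    have a: "set_integrable lborel {\<tau>1..T} (\<lambda>t. (1/2) *\<^sub>R fh t + (1/2) *\<^sub>R f1 t)" by (rule lin_int(1)[OF ih1 i11])
    have b: "set_integrable lborel {\<tau>1..T} (\<lambda>t. (1/4::real) *\<^sub>R g t)" using ig by (rule set_integrable_scaleR_right)
    have "(LINT t:{\<tau>1..T}|lborel. (1/2) * fh t + (1/2) * f1 t - (1/4) * g t)
        = (LINT t:{\<tau>1..T}|lborel. ((1/2) *\<^sub>R fh t + (1/2) *\<^sub>R f1 t) - (1/4::real) *\<^sub>R g t)" by simp
    also have "\<dots> = (LINT t:{\<tau>1..T}|lborel. (1/2) *\<^sub>R fh t + (1/2) *\<^sub>R f1 t) - (LINT t:{\<tau>1..T}|lborel. (1/4::real) *\<^sub>R g t)"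
      by (rule set_integral_diff(2)[OF a b])
    also have "(LINT t:{\<tau>1..T}|lborel. (1/2) *\<^sub>R fh t + (1/2) *\<^sub>R f1 t) = (1/2) *\<^sub>R (LINT t:{\<tau>1..T}|lborel. fh t) + (1/2) *\<^sub>R (LINT t:{\<tau>1..T}|lborel. f1 t)"
      by (rule lin_int(2)[OF ih1 i11])
    finally show ?thesis unfolding cost_def fh_def f1_def by simp
  qed
  finally have "cost Q \<tau>1 T um wm = cost Q \<tau>1 T u1 w1 - (1/4) * (LINT t:{\<tau>1..T}|lborel. g t)"
    using ceq by simp
  with c3 have Dle: "(LINT t:{\<tau>1..T}|lborel. g t) \<le> 0" by simp
  have gnn: "0 \<le> g t" for t unfolding g_def using Qpos[of "dw t"] by simp
  have "(\<integral>t. indicator {\<tau>1..T} t *\<^sub>R g t \<partial>lborel) = 0"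
  proof -
    have "0 \<le> (\<integral>t. indicator {\<tau>1..T} t *\<^sub>R g t \<partial>lborel)"
      by (rule Bochner_Integration.integral_nonneg) (simp add: gnn)
    then show ?thesis using Dle unfolding set_lebesgue_integral_def by simp
  qed
  then have "AE t in lborel. indicator {\<tau>1..T} t *\<^sub>R g t = 0"
    using integral_nonneg_eq_0_iff_AE[of lborel "\<lambda>t. indicator {\<tau>1..T} t *\<^sub>R g t"] ig gnn
    unfolding set_integrable_def by simp
  then have AEu: "AE t in lborel. t \<in> {\<tau>1..T} \<longrightarrow> uh t = u1 t"
  proof (rule eventually_mono)
    fix t assume *: "indicator {\<tau>1..T} t *\<^sub>R g t = 0"
    show "t \<in> {\<tau>1..T} \<longrightarrow> uh t = u1 t"
    proof
      assume "t \<in> {\<tau>1..T}"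
      then have "g t = 0" using * by simp
      moreover have "0 \<le> inner (Q (dw t)) (dw t)" by (rule Qpos)
      ultimately have "(norm (du t))^2 = 0" unfolding g_def by (smt (verit) zero_le_power2)
      then show "uh t = u1 t" unfolding du_def by simp
    qed
  qed
  have part1: "AE t in lborel. t \<in> {\<tau>1<..<T} \<longrightarrow> uh t = u1 t"
    using AEu by eventually_elim auto
  have eqh: "\<forall>t\<in>{\<tau>1..T}. wh t = rhs \<tau>1 (wh \<tau>1) y uh wh t" using mres unfolding mild_iff by blast
  have eq1: "\<forall>t\<in>{\<tau>1..T}. w1 t = rhs \<tau>1 (wh \<tau>1) y u1 w1 t" using o2(2) unfolding mild_iff by blast
  have deq: "\<forall>t\<in>{\<tau>1..T}. dw t = (LINT s:{\<tau>1..t}|lborel. S (t - s) (Iw \<tau>1 dw s))"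
  proof
    fix t assume t: "t \<in> {\<tau>1..T}"
    have at: "\<tau>1 \<le> t" and tT: "t \<le> T" using t by auto
    have whL': "L2c \<tau>1 t wh" and w1L': "L2c \<tau>1 t w1" and uhL': "L2c \<tau>1 t uh" and u1L': "L2c \<tau>1 t u1"
      using L2c_subset[OF wh1L] L2c_subset[OF w1L] L2c_subset[OF uh1L] L2c_subset[OF u1L] tT by auto
    note Th = terms_int[OF t10 at tT whL' yL uhL']
    note T1 = terms_int[OF t10 at tT w1L' yL u1L']
    have Beq: "(LINT s:{\<tau>1..t}|lborel. S (t - s) (B (uh s))) = (LINT s:{\<tau>1..t}|lborel. S (t - s) (B (u1 s)))"
    proof (rule set_integral_cong_AE'[OF set_integrable_imp_meas[OF Th(3)] set_integrable_imp_meas[OF T1(3)]])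
      show "AE x in lborel. x \<in> {\<tau>1..t} \<longrightarrow> S (t - x) (B (uh x)) = S (t - x) (B (u1 x))"
      proof (rule eventually_mono[OF AEu])
        fix x assume H: "x \<in> {\<tau>1..T} \<longrightarrow> uh x = u1 x"
        show "x \<in> {\<tau>1..t} \<longrightarrow> S (t - x) (B (uh x)) = S (t - x) (B (u1 x))"
        proof
          assume "x \<in> {\<tau>1..t}"
          then have "x \<in> {\<tau>1..T}" using tT by auto
          then show "S (t - x) (B (uh x)) = S (t - x) (B (u1 x))" using H by simp
        qed
      qed
    qed
    have Ieq: "(LINT s:{\<tau>1..t}|lborel. S (t - s) (Iw \<tau>1 wh s)) - (LINT s:{\<tau>1..t}|lborel. S (t - s) (Iw \<tau>1 w1 s))
        = (LINT s:{\<tau>1..t}|lborel. S (t - s) (Iw \<tau>1 dw s))"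
    proof -
      have "(LINT s:{\<tau>1..t}|lborel. S (t - s) (Iw \<tau>1 wh s)) - (LINT s:{\<tau>1..t}|lborel. S (t - s) (Iw \<tau>1 w1 s))
          = (LINT s:{\<tau>1..t}|lborel. S (t - s) (Iw \<tau>1 wh s) - S (t - s) (Iw \<tau>1 w1 s))"
        by (rule set_integral_diff(2)[OF Th(1) T1(1), symmetric])
      also have "\<dots> = (LINT s:{\<tau>1..t}|lborel. S (t - s) (Iw \<tau>1 dw s))"
      proof (rule set_lebesgue_integral_cong)
        show "\<forall>s. s \<in> {\<tau>1..t} \<longrightarrow> S (t - s) (Iw \<tau>1 wh s) - S (t - s) (Iw \<tau>1 w1 s) = S (t - s) (Iw \<tau>1 dw s)"
        proof (intro allI impI)
          fix s assume s: "s \<in> {\<tau>1..t}"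
          have i1: "set_integrable lborel {\<tau>1..s} (\<lambda>\<sigma>. K (s - \<sigma>) *\<^sub>R wh \<sigma>)"
            using Iw_props(1)[OF t10 _ _ tT whL'] s by auto
          have i2: "set_integrable lborel {\<tau>1..s} (\<lambda>\<sigma>. K (s - \<sigma>) *\<^sub>R w1 \<sigma>)"
            using Iw_props(1)[OF t10 _ _ tT w1L'] s by auto
          have "Iw \<tau>1 dw s = Iw \<tau>1 wh s - Iw \<tau>1 w1 s"
            unfolding Iw_def dw_def using set_integral_diff(2)[OF i1 i2]
            by (simp add: scaleR_diff_right)
          then show "S (t - s) (Iw \<tau>1 wh s) - S (t - s) (Iw \<tau>1 w1 s) = S (t - s) (Iw \<tau>1 dw s)"
            using S_linear[of "t - s"] s by (simp add: linear_diff)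
        qed
      qed simp
      finally show ?thesis .
    qed
    have e1: "wh t = rhs \<tau>1 (wh \<tau>1) y uh wh t" using eqh t by blast
    have e2: "w1 t = rhs \<tau>1 (wh \<tau>1) y u1 w1 t" using eq1 t by blast
    have "dw t = rhs \<tau>1 (wh \<tau>1) y uh wh t - rhs \<tau>1 (wh \<tau>1) y u1 w1 t"
      unfolding dw_def by (simp only: e1[symmetric] e2[symmetric])
    also have "\<dots> = (LINT s:{\<tau>1..t}|lborel. S (t - s) (Iw \<tau>1 wh s)) - (LINT s:{\<tau>1..t}|lborel. S (t - s) (Iw \<tau>1 w1 s))"
      unfolding rhs_def Beq by (simp add: algebra_simps)
    finally show "dw t = (LINT s:{\<tau>1..t}|lborel. S (t - s) (Iw \<tau>1 dw s))" using Ieq by simp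
  qed
  have "\<forall>t\<in>{\<tau>1..T}. dw t = 0" by (rule uniq_zero[OF t10 tt(2) dwL deq])
  then have part2: "\<forall>t\<in>{\<tau>1<..<T}. wh t = w1 t" unfolding dw_def by auto
  show ?thesis using part1 part2 by simp
qed

end
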